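(* Let $G$ be a subdivided $\Pi$-graph. Then every grain line $(L,\mathcal P)$ in $G$ is wild, i.e. $(L,\le_L)$ is order-isomorphic to $\mathbb{Q}\cap[0,1]$. In particular, in a subdivided $\Pi$-graph, every grain line can be chosen to be wildly presented: whenever $(L,(P_n)_{n\in\mathbb{N}})$ is an $x$–$y$ grain line in $G$, there is a subsequence $(P_{n_k})_{k\in\mathbb{N}}$ such that $(L,(P_{n_k})_{k\in\mathbb{N}})$ is a wildly presented $x$–$y$ grain line in $G$.
   Context: Graphs are simple and may be infinite; $\mathbb{N}=\{0,1,2,\dots\}$. A graph is infinitely edge-connected if it has at least two vertices and $G-E'$ is connected for every finite edge set $E'$. A $\Pi$-graph is an infinitely edge-connected graph that does not contain infinitely many internally vertex-disjoint paths between any two of its vertices. A subdivided $\Pi$-graph is a graph that is a subdivision of some $\Pi$-graph (each edge replaced by a path, new inner vertices added). An $x$–$y$ path $P$ induces the linear order $\le_P$ of traversal from $x$ to $y$ on $V(P)$. For distinct vertices $x,y$, an $x$–$y$ grain line in $G$ is a pair $(L,\mathcal P)$ where $L\subseteq V(G)$ is a countable set with a linear order $\le_L$ having least element $x$ and greatest element $y$, and $\mathcal P=(P_n)_{n\in\mathbb{N}}$ is a sequence of pairwise edge-disjoint $x$–$y$ paths in $G$, such that: (GL1) $L$ is exactly the set of vertices $v$ for which $\{n: v\in V(P_n)\}$ is a non-empty final segment $\{n:n\ge m\}$ of $\mathbb{N}$; (GL2) if a vertex of $P_n$ is not in $L$, it lies on no $P_m$ with $m\ne n$; (GL3) for every $n$,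 $\le_{P_n}$ and $\le_L$ induce the same linear order on $L_{<n}:=L\cap\bigcup_{k<n}V(P_k)$. A grain line is wild if $(L,\le_L)$ is order-isomorphic to $\mathbb{Q}\cap[0,1]$. It is wildly presented if for every $n$ and all $\ell_1<_L\ell_2$ in $L_{<n}$, the subpath $\ell_1P_n\ell_2$ of $P_n$ has a vertex in the open interval $(\ell_1,\ell_2)_L=\{\ell\in L:\ell_1<_L\ell<_L\ell_2\}$. *)

theory Defs
  imports Main "HOL-Library.Countable_Set"
begin

type_synonym 'a graph = "'a set \<times> 'a set set"

abbreviation verts :: "'a graph \<Rightarrow> 'a set" where "verts G \<equiv> fst G"
abbreviation edges :: "'a graph \<Rightarrow> 'a set set" where "edges G \<equiv> snd G"

definition graph :: "'a graph \<Rightarrow> bool" where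
  "graph G \<longleftrightarrow> (\<forall>e\<in>edges G. \<exists>u v. u \<noteq> v \<and> e = {u, v} \<and> u \<in> verts G \<and> v \<in> verts G)"

definition path_edges :: "'a list \<Rightarrow> 'a set set" where
  "path_edges p = {{p ! i, p ! Suc i} | i. Suc i < length p}"

definition is_path :: "'a graph \<Rightarrow> 'a list \<Rightarrow> bool" where
  "is_path G p \<longleftrightarrow> p \<noteq> [] \<and> distinct p \<and> set p \<subseteq> verts G \<and> path_edges p \<subseteq> edges G"

definition xy_path :: "'a graph \<Rightarrow> 'a list \<Rightarrow> 'a \<Rightarrow> 'a \<Rightarrow> bool" where
  "xy_path G p x y \<longleftrightarrow> is_path G p \<and> hd p = x \<and> last p = y"

definition path_le :: "'a list \<Rightarrow> 'a \<Rightarrow> 'a \<Rightarrow> bool" where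
  "path_le p a b \<longleftrightarrow> (\<exists>i j. i \<le> j \<and> j < length p \<and> p ! i = a \<and> p ! j = b)"

definition subpath_verts :: "'a list \<Rightarrow> 'a \<Rightarrow> 'a \<Rightarrow> 'a set" where
  "subpath_verts p a b = {v. path_le p a v \<and> path_le p v b}"

definition inf_edge_connected :: "'a graph \<Rightarrow> bool" where
  "inf_edge_connected G \<longleftrightarrow>
     (\<exists>u v. u \<in> verts G \<and> v \<in> verts G \<and> u \<noteq> v) \<and>
     (\<forall>F. finite F \<longrightarrow>
        (\<forall>u\<in>verts G. \<forall>v\<in>verts G. \<exists>p. xy_path G p u v \<and> path_edges p \<inter> F = {}))"

definition Pi_graph :: "'a graph \<Rightarrow> bool" where
  "Pi_graph G \<longleftrightarrow> graph G \<and> inf_edge_connected G \<and>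
     \<not> (\<exists>u v P. u \<in> verts G \<and> v \<in> verts G \<and> u \<noteq> v \<and> inj P \<and>
           (\<forall>n::nat. xy_path G (P n) u v) \<and>
           (\<forall>i j. i \<noteq> j \<longrightarrow> set (P i) \<inter> set (P j) \<subseteq> {u, v}))"

definition subdivision_of :: "'a graph \<Rightarrow> 'a graph \<Rightarrow> bool" where
  "subdivision_of G H \<longleftrightarrow> verts H \<subseteq> verts G \<and>
     (\<exists>\<phi>. (\<forall>e\<in>edges H. \<exists>u v. e = {u, v} \<and> xy_path G (\<phi> e) u v \<and>
                              set (\<phi> e) \<inter> verts H = {u, v}) \<and>
          (\<forall>e\<in>edges H. \<forall>e'\<in>edges H. e \<noteq> e' \<longrightarrow> set (\<phi> e) \<inter> set (\<phi> e') \<subseteq> verts H) \<and>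
          verts G = verts H \<union> (\<Union>e\<in>edges H. set (\<phi> e)) \<and>
          edges G = (\<Union>e\<in>edges H. path_edges (\<phi> e)))"

definition subdivided_Pi_graph :: "'a graph \<Rightarrow> bool" where
  "subdivided_Pi_graph G \<longleftrightarrow> graph G \<and> (\<exists>H. Pi_graph H \<and> subdivision_of G H)"

definition L_lt :: "'a set \<Rightarrow> (nat \<Rightarrow> 'a list) \<Rightarrow> nat \<Rightarrow> 'a set" where
  "L_lt L P n = L \<inter> (\<Union>k<n. set (P k))"

definition grain_line :: "'a graph \<Rightarrow> 'a \<Rightarrow> 'a \<Rightarrow> 'a set \<Rightarrow> 'a rel \<Rightarrow> (nat \<Rightarrow> 'a list) \<Rightarrow> bool" where
  "grain_line G x y L r P \<longleftrightarrow>
     x \<noteq> y \<and> x \<in> verts G \<and> y \<in> verts G \<and>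
     L \<subseteq> verts G \<and> countable L \<and> linear_order_on L r \<and>
     x \<in> L \<and> (\<forall>l\<in>L. (x, l) \<in> r) \<and> y \<in> L \<and> (\<forall>l\<in>L. (l, y) \<in> r) \<and>
     (\<forall>n. xy_path G (P n) x y) \<and>
     (\<forall>i j. i \<noteq> j \<longrightarrow> path_edges (P i) \<inter> path_edges (P j) = {}) \<and>
     \<comment> \<open>(GL1)\<close>
     L = {v. \<exists>m. {n. v \<in> set (P n)} = {m..}} \<and>
     \<comment> \<open>(GL2)\<close>
     (\<forall>n v. v \<in> set (P n) \<and> v \<notin> L \<longrightarrow> (\<forall>m. m \<noteq> n \<longrightarrow> v \<notin> set (P m))) \<and>
     \<comment> \<open>(GL3)\<close>
     (\<forall>n. \<forall>a\<in>L_lt L P n. \<forall>b\<in>L_lt L P n. path_le (P n) a b \<longleftrightarrow> (a, b) \<in> r)"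

definition wild :: "'a set \<Rightarrow> 'a rel \<Rightarrow> bool" where
  "wild L r \<longleftrightarrow> (\<exists>f. bij_betw f L {q :: rat. 0 \<le> q \<and> q \<le> 1} \<and>
                     (\<forall>a\<in>L. \<forall>b\<in>L. (a, b) \<in> r \<longleftrightarrow> f a \<le> f b))"

definition wildly_presented :: "'a set \<Rightarrow> 'a rel \<Rightarrow> (nat \<Rightarrow> 'a list) \<Rightarrow> bool" where
  "wildly_presented L r P \<longleftrightarrow>
     (\<forall>n. \<forall>l1\<in>L_lt L P n. \<forall>l2\<in>L_lt L P n. (l1, l2) \<in> r \<and> l1 \<noteq> l2 \<longrightarrow>
        (\<exists>v\<in>subpath_verts (P n) l1 l2. v \<in> L \<and> (l1, v) \<in> r \<and> v \<noteq> l1 \<and> (v, l2) \<in> r \<and> v \<noteq> l2))"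

end

theory Submission
  imports Defs
begin


definition lin :: "'a set \<Rightarrow> 'a rel \<Rightarrow> bool" where
  "lin A r \<longleftrightarrow> (\<forall>a\<in>A. (a,a)\<in>r) \<and> trans r \<and> antisym r \<and> (\<forall>a\<in>A. \<forall>b\<in>A. (a,b)\<in>r \<or> (b,a)\<in>r)"

lemma rat_between:
  fixes S T :: "rat set"
  assumes "finite S" "finite T" "\<forall>s\<in>S. 0<s \<and> s<1" "\<forall>t\<in>T. 0<t \<and> t<1" "\<forall>s\<in>S. \<forall>t\<in>T. s<t"
  shows "\<exists>b::rat. 0<b \<and> b<1 \<and> (\<forall>s\<in>S. s<b) \<and> (\<forall>t\<in>T. b<t)"
proof -
  define lo where "lo = Max (insert 0 S)"
  define up where "up = Min (insert 1 T)"
  have lo1: "lo \<in> insert 0 S" unfolding lo_def using assms(1) by (intro Max_in) auto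
  have up1: "up \<in> insert 1 T" unfolding up_def using assms(2) by (intro Min_in) auto
  have lo2: "\<forall>s\<in>S. s \<le> lo" unfolding lo_def using assms(1) by auto
  have up2: "\<forall>t\<in>T. up \<le> t" unfolding up_def using assms(2) by auto
  have lo0: "0 \<le> lo" unfolding lo_def using assms(1) by auto
  have up0: "up \<le> 1" unfolding up_def using assms(2) by auto
  have "lo < up" using lo1 up1 assms(3-5) by auto
  then show ?thesis using lo2 up2 lo0 up0
    by (intro exI[of _ "(lo+up)/2"]) (auto simp: field_simps intro: le_less_trans less_le_trans)
qed

lemma fin_max:
  assumes "finite F" "F \<noteq> {}" "F \<subseteq> A" "\<forall>a\<in>A. (a,a)\<in>R" "trans R"
    "\<forall>a\<in>A. \<forall>b\<in>A. (a,b)\<in>R \<or> (b,a)\<in>R"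
  shows "\<exists>m\<in>F. \<forall>a\<in>F. (a,m)\<in>R"
  using assms
proof (induction F rule: finite_ne_induct)
  case (singleton x)
  then show ?case by auto
next
  case (insert x F)
  then obtain m where m: "m\<in>F" "\<forall>a\<in>F. (a,m)\<in>R" by auto
  show ?case
  proof (cases "(m,x)\<in>R")
    case True
    then show ?thesis using m insert.prems by (auto dest: transD)
  next
    case False
    then have "(x,m)\<in>R" using insert.prems m by auto
    then show ?thesis using m by auto
  qed
qed

lemma interval_ne:
  assumes "finite Lo" "finite Up" "Lo \<subseteq> A" "Up \<subseteq> A" "A \<noteq> {}" "lin A r"
    "\<forall>l\<in>Lo. \<forall>u\<in>Up. (l,u)\<in>r \<and> l\<noteq>u"
    and dense: "\<forall>a\<in>A. \<forall>b\<in>A. (a,b)\<in>r \<and> a\<noteq>b \<longrightarrow> (\<exists>c\<in>A. (a,c)\<in>r \<and> a\<noteq>c \<and> (c,b)\<in>r \<and> c\<noteq>b)"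
    and nomin: "\<forall>a\<in>A. \<exists>c\<in>A. (c,a)\<in>r \<and> c\<noteq>a"
    and nomax: "\<forall>a\<in>A. \<exists>c\<in>A. (a,c)\<in>r \<and> c\<noteq>a"
  shows "\<exists>a\<in>A. (\<forall>l\<in>Lo. (l,a)\<in>r \<and> l\<noteq>a) \<and> (\<forall>u\<in>Up. (a,u)\<in>r \<and> a\<noteq>u)"
proof -
  have L: "\<forall>a\<in>A. (a,a)\<in>r" "trans r" "antisym r" "\<forall>a\<in>A. \<forall>b\<in>A. (a,b)\<in>r \<or> (b,a)\<in>r"
    using assms(6) unfolding lin_def by auto
  have Lc: "\<forall>a\<in>A. (a,a)\<in>r\<inverse>" "trans (r\<inverse>)" "\<forall>a\<in>A. \<forall>b\<in>A. (a,b)\<in>r\<inverse> \<or> (b,a)\<in>r\<inverse>"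
    using L by auto
  have strict: "\<And>a b c. (a,b)\<in>r \<Longrightarrow> (b,c)\<in>r \<Longrightarrow> b\<noteq>c \<Longrightarrow> (a,c)\<in>r \<and> a\<noteq>c"
    using L(2,3) by (metis antisymD transD)
  have strict2: "\<And>a b c. (a,b)\<in>r \<Longrightarrow> (b,c)\<in>r \<Longrightarrow> a\<noteq>b \<Longrightarrow> (a,c)\<in>r \<and> a\<noteq>c"
    using L(2,3) by (metis antisymD transD)
  show ?thesis
  proof (cases "Lo = {}")
    case True
    show ?thesis
    proof (cases "Up = {}")
      case True
      then show ?thesis using \<open>Lo = {}\<close> assms(5) by auto
    next
      case False
      obtain m where m: "m\<in>Up" "\<forall>a\<in>Up. (a,m)\<in>r\<inverse>"
        using fin_max[OF assms(2) False assms(4) Lc] by blast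
      obtain c where c: "c\<in>A" "(c,m)\<in>r" "c\<noteq>m" using nomin m assms(4) by blast
      have "\<forall>u\<in>Up. (c,u)\<in>r \<and> c\<noteq>u"
      proof
        fix u assume "u\<in>Up"
        then have "(m,u)\<in>r" using m by auto
        then show "(c,u)\<in>r \<and> c\<noteq>u" using strict2[OF c(2) _ c(3)] by blast
      qed
      then show ?thesis using c \<open>Lo = {}\<close> by blast
    qed
  next
    case False
    obtain m where m: "m\<in>Lo" "\<forall>a\<in>Lo. (a,m)\<in>r"
      using fin_max[OF assms(1) False assms(3) L(1,2,4)] by blast
    show ?thesis
    proof (cases "Up = {}")
      case True
      obtain c where c: "c\<in>A" "(m,c)\<in>r" "c\<noteq>m" using nomax m assms(3) by blast
      have "\<forall>l\<in>Lo. (l,c)\<in>r \<and> l\<noteq>c"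
      proof
        fix l assume "l\<in>Lo"
        then have "(l,m)\<in>r" using m by auto
        then show "(l,c)\<in>r \<and> l\<noteq>c" using strict[OF _ c(2)] c(3) by blast
      qed
      then show ?thesis using c True by blast
    next
      case False
      obtain m2 where m2: "m2\<in>Up" "\<forall>a\<in>Up. (a,m2)\<in>r\<inverse>"
        using fin_max[OF assms(2) False assms(4) Lc] by blast
      have "(m,m2)\<in>r \<and> m\<noteq>m2" using assms(7) m m2 by auto
      then obtain c where c: "c\<in>A" "(m,c)\<in>r" "m\<noteq>c" "(c,m2)\<in>r" "c\<noteq>m2"
        using dense m m2 assms(3,4) by blast
      have "\<forall>l\<in>Lo. (l,c)\<in>r \<and> l\<noteq>c"
      proof
        fix l assume "l\<in>Lo"
        then have "(l,m)\<in>r" using m by auto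
        then show "(l,c)\<in>r \<and> l\<noteq>c" using strict[OF _ c(2)] c(3) by blast
      qed
      moreover have "\<forall>u\<in>Up. (c,u)\<in>r \<and> c\<noteq>u"
      proof
        fix u assume "u\<in>Up"
        then have "(m2,u)\<in>r" using m2 by auto
        then show "(c,u)\<in>r \<and> c\<noteq>u" using strict2[OF c(4) _ c(5)] by blast
      qed
      ultimately show ?thesis using c by blast
    qed
  qed
qed

lemma bound_ex:
  assumes "\<forall>j<(k::nat). \<exists>t::nat. Q j t"
  shows "\<exists>N. \<forall>j<k. \<exists>t\<le>N. Q j t"
proof -
  obtain h where h: "\<forall>j<k. Q j (h j)" using assms by metis
  have "\<forall>j<k. h j \<le> (\<Sum>i<k. h i)"
    by (auto intro: member_le_sum)
  then show ?thesis using h by blast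
qed

definition consi :: "(nat \<Rightarrow> 'a) \<Rightarrow> (nat \<Rightarrow> rat) \<Rightarrow> 'a rel \<Rightarrow> nat list \<Rightarrow> nat \<Rightarrow> nat \<Rightarrow> bool" where
  "consi ea eb r xs n k \<longleftrightarrow> (\<forall>m<n. ((ea m, ea n) \<in> r \<longleftrightarrow> eb (xs!m) \<le> eb k) \<and>
                                   ((ea n, ea m) \<in> r \<longleftrightarrow> eb k \<le> eb (xs!m)))"

fun gl :: "(nat \<Rightarrow> 'a) \<Rightarrow> (nat \<Rightarrow> rat) \<Rightarrow> 'a rel \<Rightarrow> nat \<Rightarrow> nat list" where
  "gl ea eb r 0 = []"
| "gl ea eb r (Suc n) = gl ea eb r n @ [LEAST k. consi ea eb r (gl ea eb r n) n k]"

definition gg :: "(nat \<Rightarrow> 'a) \<Rightarrow> (nat \<Rightarrow> rat) \<Rightarrow> 'a rel \<Rightarrow> nat \<Rightarrow> nat" where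
  "gg ea eb r n = gl ea eb r (Suc n) ! n"

lemma gl_len: "length (gl ea eb r n) = n"
  by (induction n) auto

lemma gl_nth: "m < n \<Longrightarrow> gl ea eb r n ! m = gg ea eb r m"
proof (induction n)
  case 0
  then show ?case by simp
next
  case (Suc n)
  then show ?case
    by (cases "m = n") (auto simp: gg_def nth_append gl_len)
qed

lemma gg_eq: "gg ea eb r n = (LEAST k. (\<forall>m<n. ((ea m, ea n) \<in> r \<longleftrightarrow> eb (gg ea eb r m) \<le> eb k) \<and>
                                   ((ea n, ea m) \<in> r \<longleftrightarrow> eb k \<le> eb (gg ea eb r m))))"
proof -
  have "gg ea eb r n = (LEAST k. consi ea eb r (gl ea eb r n) n k)"
    unfolding gg_def by (simp add: nth_append gl_len)
  also have "\<dots> = (LEAST k. (\<forall>m<n. ((ea m, ea n) \<in> r \<longleftrightarrow> eb (gg ea eb r m) \<le> eb k) \<and>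
                                   ((ea n, ea m) \<in> r \<longleftrightarrow> eb k \<le> eb (gg ea eb r m))))"
    unfolding consi_def by (simp add: gl_nth)
  finally show ?thesis .
qed

lemma forth_iso:
  assumes cnt: "countable A" and ne: "A \<noteq> {}" and lin: "lin A r"
    and dense: "\<forall>a\<in>A. \<forall>b\<in>A. (a,b)\<in>r \<and> a\<noteq>b \<longrightarrow> (\<exists>c\<in>A. (a,c)\<in>r \<and> a\<noteq>c \<and> (c,b)\<in>r \<and> c\<noteq>b)"
    and nomin: "\<forall>a\<in>A. \<exists>c\<in>A. (c,a)\<in>r \<and> c\<noteq>a"
    and nomax: "\<forall>a\<in>A. \<exists>c\<in>A. (a,c)\<in>r \<and> c\<noteq>a"
  shows "\<exists>f. bij_betw f A {q::rat. 0<q \<and> q<1} \<and> (\<forall>a\<in>A. \<forall>b\<in>A. (a,b)\<in>r \<longleftrightarrow> f a \<le> f b)"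
proof -
  have rA: "\<And>a. a\<in>A \<Longrightarrow> (a,a)\<in>r" and tr: "\<And>a b c. (a,b)\<in>r \<Longrightarrow> (b,c)\<in>r \<Longrightarrow> (a,c)\<in>r"
    and an: "\<And>a b. (a,b)\<in>r \<Longrightarrow> (b,a)\<in>r \<Longrightarrow> a = b"
    and to: "\<And>a b. a\<in>A \<Longrightarrow> b\<in>A \<Longrightarrow> (a,b)\<in>r \<or> (b,a)\<in>r"
    using lin unfolding lin_def by (auto dest: transD antisymD)
  define B where "B = {q::rat. 0<q \<and> q<1}"
  have cB: "countable B" by simp
  have neB: "B \<noteq> {}" unfolding B_def by (auto intro!: exI[of _ "1/2"])
  define ea where "ea = from_nat_into A"
  define eb where "eb = from_nat_into B"
  have eaA: "\<And>n. ea n \<in> A" unfolding ea_def using from_nat_into[OF ne] by auto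
  have ebB: "\<And>n. eb n \<in> B" unfolding eb_def using from_nat_into[OF neB] by auto
  have eaS: "\<And>a. a \<in> A \<Longrightarrow> \<exists>n. ea n = a" unfolding ea_def
    using range_from_nat_into[OF ne cnt] by (metis rangeE)
  have ebS: "\<And>b. b \<in> B \<Longrightarrow> \<exists>n. eb n = b" unfolding eb_def
    using range_from_nat_into[OF neB cB] by (metis rangeE)
  define g where "g = gg ea eb r"
  define C where "C = (\<lambda>n k. \<forall>m<n. ((ea m, ea n) \<in> r \<longleftrightarrow> eb (g m) \<le> eb k) \<and>
                                   ((ea n, ea m) \<in> r \<longleftrightarrow> eb k \<le> eb (g m)))"
  have gdef: "\<And>n. g n = (LEAST k. C n k)" unfolding g_def C_def by (rule gg_eq)
  have ordof: "(ea m, ea m')\<in>r \<longleftrightarrow> eb (g m) \<le> eb (g m')"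
    if "C (max m m') (g (max m m'))" for m m'
  proof -
    consider "m < m'" | "m' < m" | "m = m'" by linarith
    then show ?thesis
    proof cases
      case 1 then show ?thesis using that unfolding C_def by (auto simp: max_def)
    next
      case 2 then show ?thesis using that unfolding C_def by (auto simp: max_def)
    next
      case 3 then show ?thesis using rA eaA by auto
    qed
  qed
  have Cn: "C n (g n)" for n
  proof (induction n rule: less_induct)
    case (less n)
    have ord: "(ea m, ea m')\<in>r \<longleftrightarrow> eb (g m) \<le> eb (g m')" if "m<n" "m'<n" for m m'
      using ordof[of m m'] less that by (simp add: max_def)
    have ex: "\<exists>k. C n k"
    proof (cases "\<exists>m<n. ea m = ea n")
      case True
      then obtain m where m: "m<n" "ea m = ea n" by auto
      have "C n (g m)" unfolding C_def using m by (simp add: m(2)[symmetric] ord)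
      then show ?thesis by blast
    next
      case False
      define S where "S = {eb (g m) | m. m<n \<and> (ea m, ea n)\<in>r}"
      define T where "T = {eb (g m) | m. m<n \<and> (ea n, ea m)\<in>r}"
      have fS: "finite S" unfolding S_def by auto
      have fT: "finite T" unfolding T_def by auto
      have ST: "\<forall>s\<in>S. \<forall>t\<in>T. s<t"
      proof (intro ballI)
        fix s t assume "s\<in>S" "t\<in>T"
        then obtain m1 m2 where m: "s = eb (g m1)" "m1<n" "(ea m1, ea n)\<in>r"
          "t = eb (g m2)" "m2<n" "(ea n, ea m2)\<in>r" unfolding S_def T_def by auto
        have "(ea m1, ea m2)\<in>r" using m tr by blast
        then have le: "s \<le> t" using ord m by auto
        have "s \<noteq> t"
        proof
          assume "s = t"
          then have "(ea m2, ea m1)\<in>r" using ord m by auto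
          then have "(ea n, ea m1)\<in>r" using m tr by blast
          then have "ea m1 = ea n" using an m by blast
          then show False using False m by blast
        qed
        then show "s < t" using le by auto
      qed
      have "\<forall>s\<in>S. 0<s \<and> s<1" "\<forall>t\<in>T. 0<t \<and> t<1"
        unfolding S_def T_def using ebB unfolding B_def by auto
      then obtain b where b: "0<b" "b<1" "\<forall>s\<in>S. s<b" "\<forall>t\<in>T. b<t"
        using rat_between[OF fS fT _ _ ST] by blast
      then obtain k where k: "eb k = b" using ebS[of b] unfolding B_def by blast
      have "C n k" unfolding C_def
      proof (intro allI impI)
        fix m assume mn: "m < n"
        have ne: "ea m \<noteq> ea n" using False mn by blast
        show "((ea m, ea n) \<in> r \<longleftrightarrow> eb (g m) \<le> eb k) \<and> ((ea n, ea m) \<in> r \<longleftrightarrow> eb k \<le> eb (g m))"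
        proof (cases "(ea m, ea n)\<in>r")
          case True
          then have "eb (g m) \<in> S" unfolding S_def using mn by auto
          then have "eb (g m) < eb k" using b k by auto
          moreover have "(ea n, ea m) \<notin> r" using True an ne by blast
          ultimately show ?thesis using True by auto
        next
          case F: False
          then have T1: "(ea n, ea m)\<in>r" using to eaA by blast
          then have "eb (g m) \<in> T" unfolding T_def using mn by auto
          then have "eb k < eb (g m)" using b k by auto
          then show ?thesis using T1 F by auto
        qed
      qed
      then show ?thesis by blast
    qed
    then show ?case unfolding gdef by (rule LeastI_ex)
  qed
  have ord: "\<And>m m'. (ea m, ea m')\<in>r \<longleftrightarrow> eb (g m) \<le> eb (g m')"
    by (rule ordof[OF Cn])
  define idx where "idx = (\<lambda>a. SOME n. ea n = a)"
  have idx: "ea (idx a) = a" if "a\<in>A" for a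
    unfolding idx_def by (rule someI_ex[OF eaS[OF that]])
  define f where "f = (\<lambda>a. eb (g (idx a)))"
  have fo: "\<forall>a\<in>A. \<forall>b\<in>A. (a,b)\<in>r \<longleftrightarrow> f a \<le> f b"
  proof (intro ballI)
    fix a b assume ab: "a\<in>A" "b\<in>A"
    have "(a,b)\<in>r \<longleftrightarrow> (ea (idx a), ea (idx b))\<in>r" using idx ab by simp
    also have "\<dots> \<longleftrightarrow> f a \<le> f b" unfolding f_def by (rule ord)
    finally show "(a,b)\<in>r \<longleftrightarrow> f a \<le> f b" .
  qed
  have fB: "f ` A \<subseteq> B" unfolding f_def using ebB by auto
  have finj: "inj_on f A"
  proof (rule inj_onI)
    fix a b assume "a\<in>A" "b\<in>A" "f a = f b"
    then show "a = b" using fo an by auto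
  qed
  have rng: "eb (g n) \<in> f ` A" for n
  proof -
    have "ea (idx (ea n)) = ea n" using idx eaA by auto
    then have "(ea (idx (ea n)), ea n)\<in>r" "(ea n, ea (idx (ea n)))\<in>r" using rA eaA by auto
    then have "eb (g (idx (ea n))) \<le> eb (g n)" "eb (g n) \<le> eb (g (idx (ea n)))"
      using ord by blast+
    then have "eb (g (idx (ea n))) = eb (g n)" by (rule order_antisym)
    then show ?thesis unfolding f_def using eaA by (metis image_eqI)
  qed
  have surj: "B \<subseteq> range (\<lambda>n. eb (g n))"
  proof (rule ccontr)
    assume "\<not> B \<subseteq> range (\<lambda>n. eb (g n))"
    then obtain q where q: "q \<in> B" "q \<notin> range (\<lambda>n. eb (g n))" by auto
    obtain k0 where "eb k0 = q" using ebS q by auto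
    then have ex0: "\<exists>k. eb k \<notin> range (\<lambda>n. eb (g n))" using q by auto
    define k where "k = (LEAST k. eb k \<notin> range (\<lambda>n. eb (g n)))"
    have k: "eb k \<notin> range (\<lambda>n. eb (g n))" unfolding k_def using ex0 by (rule LeastI_ex)
    have kj: "\<forall>j<k. \<exists>t. eb (g t) = eb j"
      using not_less_Least[of _ "\<lambda>k. eb k \<notin> range (\<lambda>n. eb (g n))"] unfolding k_def
      by (metis (mono_tags, lifting) rangeE)
    obtain N where N: "\<forall>j<k. \<exists>t\<le>N. eb (g t) = eb j" using bound_ex[OF kj] by blast
    define q0 where "q0 = eb k"
    have neq: "eb (g t) \<noteq> q0" for t
    proof
      assume "eb (g t) = q0"
      then have "eb k = (\<lambda>n. eb (g n)) t" unfolding q0_def by simp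
      then show False using k by blast
    qed
    define Lower where "Lower = {m. m \<le> N \<and> eb (g m) < q0}"
    define Upper where "Upper = {m. m \<le> N \<and> q0 < eb (g m)}"
    have LU: "\<And>m. m \<le> N \<Longrightarrow> m \<in> Lower \<or> m \<in> Upper"
      unfolding Lower_def Upper_def using neq by (auto simp: neq_iff)
    have LUs: "\<forall>l\<in>ea ` Lower. \<forall>u\<in>ea ` Upper. (l,u)\<in>r \<and> l\<noteq>u"
    proof (intro ballI)
      fix l u assume "l \<in> ea ` Lower" "u \<in> ea ` Upper"
      then obtain m m' where mm: "l = ea m" "u = ea m'" "eb (g m) < q0" "q0 < eb (g m')"
        unfolding Lower_def Upper_def by auto
      then have "(l,u)\<in>r" using ord by auto
      moreover have "l \<noteq> u"
      proof
        assume "l = u"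
        then have "(ea m', ea m)\<in>r" using mm rA eaA by auto
        then show False using ord mm by force
      qed
      ultimately show "(l,u)\<in>r \<and> l\<noteq>u" by blast
    qed
    obtain a0 where a0: "a0\<in>A" "\<forall>l\<in>ea ` Lower. (l,a0)\<in>r \<and> l\<noteq>a0"
      "\<forall>u\<in>ea ` Upper. (a0,u)\<in>r \<and> a0\<noteq>u"
      using interval_ne[of "ea ` Lower" "ea ` Upper" A r, OF _ _ _ _ ne lin LUs dense nomin nomax]
        eaA unfolding Lower_def Upper_def by auto
    define I where "I = {a\<in>A. (\<forall>m\<in>Lower. (ea m, a)\<in>r \<and> ea m \<noteq> a) \<and> (\<forall>m\<in>Upper. (a, ea m)\<in>r \<and> a \<noteq> ea m)}"
    have "a0 \<in> I" unfolding I_def using a0 by auto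
    then have exI0: "\<exists>n. ea n \<in> I" using eaS[OF a0(1)] by auto
    define m0 where "m0 = (LEAST n. ea n \<in> I)"
    have m0I: "ea m0 \<in> I" unfolding m0_def using exI0 by (rule LeastI_ex)
    have belowm0: "\<And>n. n < m0 \<Longrightarrow> ea n \<notin> I" unfolding m0_def by (rule not_less_Least)
    have notI: "ea t \<notin> I" if "t \<le> N" for t
    proof
      assume "ea t \<in> I"
      then have "\<forall>m\<in>Lower. ea m \<noteq> ea t" "\<forall>m\<in>Upper. ea t \<noteq> ea m" unfolding I_def by auto
      then show False using LU[OF that] by auto
    qed
    have Nm0: "N < m0" using notI m0I by (meson not_le)
    have m0L: "\<And>m. m\<in>Lower \<Longrightarrow> (ea m, ea m0)\<in>r \<and> ea m \<noteq> ea m0"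
      and m0U: "\<And>m. m\<in>Upper \<Longrightarrow> (ea m0, ea m)\<in>r \<and> ea m0 \<noteq> ea m"
      using m0I unfolding I_def by auto
    have Cm: "C m0 k" unfolding C_def
    proof (intro allI impI)
      fix m' assume m'm0: "m' < m0"
      have side: "(eb (g m') < q0 \<and> (ea m', ea m0)\<in>r \<and> ea m' \<noteq> ea m0) \<or>
                  (q0 < eb (g m') \<and> (ea m0, ea m')\<in>r \<and> ea m0 \<noteq> ea m')"
      proof (cases "m' \<le> N")
        case True
        then show ?thesis using LU m0L m0U unfolding Lower_def Upper_def by blast
      next
        case False
        have nI: "ea m' \<notin> I" using belowm0 m'm0 by blast
        then consider (lo) m'' where "m''\<in>Lower" "\<not> ((ea m'', ea m')\<in>r \<and> ea m'' \<noteq> ea m')"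
          | (up) m'' where "m''\<in>Upper" "\<not> ((ea m', ea m'')\<in>r \<and> ea m' \<noteq> ea m'')"
          unfolding I_def using eaA by blast
        then show ?thesis
        proof cases
          case lo
          then have h: "(ea m', ea m'')\<in>r" using to[OF eaA eaA, of m' m''] rA[OF eaA, of m'] by auto
          then have "eb (g m') \<le> eb (g m'')" using ord by auto
          moreover have "eb (g m'') < q0" using lo unfolding Lower_def by auto
          moreover have "(ea m', ea m0)\<in>r" using h m0L[OF lo(1)] tr by blast
          moreover have "ea m' \<noteq> ea m0"
          proof
            assume "ea m' = ea m0"
            then have "(ea m0, ea m'')\<in>r" using h by simp
            then show False using m0L[OF lo(1)] an by blast
          qed
          ultimately show ?thesis by (meson le_less_trans)
        next
          case up
          then have h: "(ea m'', ea m')\<in>r" using to[OF eaA eaA, of m' m''] rA[OF eaA, of m'] by auto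
          then have "eb (g m'') \<le> eb (g m')" using ord by auto
          moreover have "q0 < eb (g m'')" using up unfolding Upper_def by auto
          moreover have "(ea m0, ea m')\<in>r" using h m0U[OF up(1)] tr by blast
          moreover have "ea m0 \<noteq> ea m'"
          proof
            assume "ea m0 = ea m'"
            then have "(ea m'', ea m0)\<in>r" using h by simp
            then show False using m0U[OF up(1)] an by blast
          qed
          ultimately show ?thesis by (meson less_le_trans)
        qed
      qed
      show "((ea m', ea m0) \<in> r \<longleftrightarrow> eb (g m') \<le> eb k) \<and> ((ea m0, ea m') \<in> r \<longleftrightarrow> eb k \<le> eb (g m'))"
      proof -
        have "(ea m0, ea m')\<in>r \<Longrightarrow> (ea m', ea m0)\<in>r \<Longrightarrow> False" using an side by metis
        then show ?thesis using side unfolding q0_def by force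
      qed
    qed
    have notC: "\<not> C m0 j" if jk: "j < k" for j
    proof
      assume Cj: "C m0 j"
      obtain t where t: "t \<le> N" "eb (g t) = eb j" using N[rule_format, OF jk] by blast
      have "t < m0" using t Nm0 by auto
      then have "((ea t, ea m0)\<in>r \<longleftrightarrow> eb (g t) \<le> eb j) \<and> ((ea m0, ea t)\<in>r \<longleftrightarrow> eb j \<le> eb (g t))"
        using Cj unfolding C_def by blast
      then have "(ea t, ea m0)\<in>r" "(ea m0, ea t)\<in>r" using t(2) by simp_all
      then have "ea t = ea m0" using an by blast
      then show False using notI[OF t(1)] m0I by simp
    qed
    have "g m0 = k" unfolding gdef
    proof (rule Least_equality)
      show "C m0 k" by (rule Cm)
      fix y assume "C m0 y" then show "k \<le> y" using notC not_le by blast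
    qed
    then have "eb k = (\<lambda>n. eb (g n)) m0" by simp
    then show False using k by blast
  qed
  have "B \<subseteq> f ` A" using surj rng by blast
  then have "f ` A = B" using fB by blast
  then have "bij_betw f A B" using finj unfolding bij_betw_def by auto
  then show ?thesis using fo unfolding B_def by blast
qed



lemma pe_Nil[simp]: "path_edges [] = {}"
  by (simp add: path_edges_def)

lemma pe_single[simp]: "path_edges [a] = {}"
  by (simp add: path_edges_def)

lemma pe_Cons2[simp]: "path_edges (a # b # zs) = insert {a,b} (path_edges (b # zs))"
proof
  show "path_edges (a # b # zs) \<subseteq> insert {a,b} (path_edges (b # zs))"
  proof
    fix f assume "f \<in> path_edges (a # b # zs)"
    then obtain i where i: "f = {(a#b#zs) ! i, (a#b#zs) ! Suc i}" "Suc i < length (a#b#zs)"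
      unfolding path_edges_def by blast
    show "f \<in> insert {a,b} (path_edges (b # zs))"
    proof (cases i)
      case 0
      then show ?thesis using i by simp
    next
      case (Suc j)
      then have "f = {(b#zs) ! j, (b#zs) ! Suc j}" "Suc j < length (b#zs)" using i by auto
      then show ?thesis unfolding path_edges_def by blast
    qed
  qed
next
  show "insert {a,b} (path_edges (b # zs)) \<subseteq> path_edges (a # b # zs)"
  proof
    fix f assume "f \<in> insert {a,b} (path_edges (b # zs))"
    then consider "f = {a,b}" | "f \<in> path_edges (b # zs)" by blast
    then show "f \<in> path_edges (a # b # zs)"
    proof cases
      case 1
      then have "f = {(a#b#zs) ! 0, (a#b#zs) ! Suc 0}" "Suc 0 < length (a#b#zs)" by auto
      then show ?thesis unfolding path_edges_def by blast
    next
      case 2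
      then obtain j where j: "f = {(b#zs) ! j, (b#zs) ! Suc j}" "Suc j < length (b#zs)"
        unfolding path_edges_def by blast
      then have "f = {(a#b#zs) ! Suc j, (a#b#zs) ! Suc (Suc j)}" "Suc (Suc j) < length (a#b#zs)" by auto
      then show ?thesis unfolding path_edges_def by blast
    qed
  qed
qed

lemma pe_Cons_sub: "path_edges w \<subseteq> path_edges (x # w)"
  by (cases w) auto

lemma pe_append_right: "path_edges ys \<subseteq> path_edges (xs @ ys)"
proof (induction xs)
  case Nil
  then show ?case by simp
next
  case (Cons x xs)
  then show ?case using pe_Cons_sub[of "xs @ ys" x] by auto
qed

lemma pe_append_left: "path_edges xs \<subseteq> path_edges (xs @ ys)"
proof (induction xs)
  case Nil
  then show ?case by simp
next
  case (Cons x xs)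
  show ?case
  proof (cases xs)
    case Nil
    then show ?thesis by simp
  next
    case (Cons b zs)
    then show ?thesis using Cons.IH by auto
  qed
qed

lemma pe_infix: "path_edges ys \<subseteq> path_edges (xs @ ys @ zs)"
  using pe_append_left[of ys zs] pe_append_right[of "ys @ zs" xs] by auto

lemma pe_sub_set: "f \<in> path_edges p \<Longrightarrow> f \<subseteq> set p"
  unfolding path_edges_def by auto

lemma pe_finite: "finite (path_edges p)"
proof -
  have "path_edges p = (\<lambda>i. {p ! i, p ! Suc i}) ` {i. Suc i < length p}"
    unfolding path_edges_def by auto
  moreover have "finite {i. Suc i < length p}" by (rule finite_subset[of _ "{..<length p}"]) auto
  ultimately show ?thesis by simp
qed

lemma path_le_iff: "path_le p u w \<longleftrightarrow> (\<exists>as bs. p = as @ u # bs \<and> w \<in> set (u # bs))"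
proof
  assume "path_le p u w"
  then obtain i j where ij: "i \<le> j" "j < length p" "p ! i = u" "p ! j = w"
    unfolding path_le_def by blast
  have il: "i < length p" using ij by auto
  have d: "drop i p = u # drop (Suc i) p" using Cons_nth_drop_Suc[OF il] ij by simp
  have p: "p = take i p @ u # drop (Suc i) p"
    using id_take_nth_drop[OF il] ij by simp
  have "w = drop i p ! (j - i)" using ij by simp
  moreover have "j - i < length (drop i p)" using ij by auto
  ultimately have "w \<in> set (drop i p)" by (metis nth_mem)
  then show "\<exists>as bs. p = as @ u # bs \<and> w \<in> set (u # bs)" using p d by metis
next
  assume "\<exists>as bs. p = as @ u # bs \<and> w \<in> set (u # bs)"
  then obtain as bs where ab: "p = as @ u # bs" "w \<in> set (u # bs)" by blast
  then obtain k where k: "k < length (u # bs)" "(u # bs) ! k = w" by (meson in_set_conv_nth)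
  have "length as \<le> length as + k" "length as + k < length p" "p ! length as = u" "p ! (length as + k) = w"
    using ab k by (auto simp: nth_append)
  then show "path_le p u w" unfolding path_le_def by blast
qed

lemma edge_at:
  assumes "2 \<le> length p" "v \<in> set p"
  shows "\<exists>f\<in>path_edges p. v \<in> f"
proof -
  obtain k where k: "k < length p" "p ! k = v" using assms(2) by (meson in_set_conv_nth)
  show ?thesis
  proof (cases "Suc k < length p")
    case True
    then have "{p ! k, p ! Suc k} \<in> path_edges p" unfolding path_edges_def by blast
    then show ?thesis using k by auto
  next
    case False
    then have "k \<ge> 1" using assms(1) k by auto
    then have "Suc (k - 1) < length p" "Suc (k-1) = k" using k by auto
    then have "{p ! (k-1), p ! Suc (k-1)} \<in> path_edges p" unfolding path_edges_def by blast
    then show ?thesis using k \<open>Suc (k-1) = k\<close> by auto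
  qed
qed

lemma end_edge_unique:
  assumes "distinct p" "f \<in> path_edges p" "g \<in> path_edges p" "v \<in> f" "v \<in> g"
    "v = hd p \<or> v = last p"
  shows "f = g"
proof -
  obtain i where i: "f = {p ! i, p ! Suc i}" "Suc i < length p" using assms(2) unfolding path_edges_def by blast
  obtain j where j: "g = {p ! j, p ! Suc j}" "Suc j < length p" using assms(3) unfolding path_edges_def by blast
  have ne: "p \<noteq> []" using i by auto
  have key: "\<And>k. Suc k < length p \<Longrightarrow> v \<in> {p ! k, p ! Suc k} \<Longrightarrow>
      (v = hd p \<and> k = 0) \<or> (v = last p \<and> Suc k = length p - 1)"
  proof -
    fix k assume k: "Suc k < length p" "v \<in> {p ! k, p ! Suc k}"
    show "(v = hd p \<and> k = 0) \<or> (v = last p \<and> Suc k = length p - 1)"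
      using assms(6)
    proof
      assume v: "v = hd p"
      then have v0: "v = p ! 0" using ne by (simp add: hd_conv_nth)
      have h1: "p ! k = p ! 0 \<Longrightarrow> k = 0" using assms(1) k ne nth_eq_iff_index_eq[of p k 0] by auto
      have h2: "p ! Suc k \<noteq> p ! 0" using assms(1) k ne nth_eq_iff_index_eq[of p "Suc k" 0] by auto
      have "p ! k = p ! 0" using k(2) v0 h2 by blast
      then have "k = 0" by (rule h1)
      then show ?thesis using v by simp
    next
      assume v: "v = last p"
      then have v0: "v = p ! (length p - 1)" using ne by (simp add: last_conv_nth)
      have h1: "p ! k \<noteq> p ! (length p - 1)" using assms(1) k ne nth_eq_iff_index_eq[of p k "length p - 1"] by auto
      have h2: "p ! Suc k = p ! (length p - 1) \<Longrightarrow> Suc k = length p - 1"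
        using assms(1) k ne nth_eq_iff_index_eq[of p "Suc k" "length p - 1"] by auto
      have "p ! Suc k = p ! (length p - 1)" using k(2) v0 h1 by blast
      then have "Suc k = length p - 1" by (rule h2)
      then show ?thesis using v by simp
    qed
  qed
  have ki: "(v = hd p \<and> i = 0) \<or> (v = last p \<and> Suc i = length p - 1)" using key i assms(4) by blast
  have kj: "(v = hd p \<and> j = 0) \<or> (v = last p \<and> Suc j = length p - 1)" using key j assms(5) by blast
  have "i = j"
  proof -
    have "hd p \<noteq> last p \<or> length p = 1"
    proof (cases "length p = 1")
      case False
      then have "0 \<noteq> length p - 1" using i by auto
      then have "p ! 0 \<noteq> p ! (length p - 1)" using assms(1) i ne nth_eq_iff_index_eq[of p 0 "length p - 1"] by auto
      then show ?thesis using ne by (simp add: hd_conv_nth last_conv_nth)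
    qed simp
    then show ?thesis using ki kj i by auto
  qed
  then show ?thesis using i j by simp
qed

lemma filter_consec:
  "Suc t < length (filter Pd q) \<Longrightarrow>
   \<exists>as cs ds. q = as @ (filter Pd q ! t) # cs @ (filter Pd q ! Suc t) # ds \<and> (\<forall>c\<in>set cs. \<not> Pd c)"
proof (induction q arbitrary: t)
  case Nil
  then show ?case by simp
next
  case (Cons z q)
  show ?case
  proof (cases "Pd z")
    case True
    show ?thesis
    proof (cases t)
      case 0
      have "filter Pd q \<noteq> []" using Cons.prems True by auto
      then obtain y rest where yr: "filter Pd q = y # rest" by (cases "filter Pd q") auto
      then obtain us vs where uv: "q = us @ y # vs" "\<forall>u\<in>set us. \<not> Pd u"
        using filter_eq_ConsD[OF yr] by blast
      have "z # q = [] @ (filter Pd (z # q) ! t) # us @ (filter Pd (z # q) ! Suc t) # vs"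
        using 0 True yr uv by simp
      then show ?thesis using uv by blast
    next
      case (Suc t')
      then have "Suc t' < length (filter Pd q)" using Cons.prems True by auto
      then obtain as cs ds where h: "q = as @ (filter Pd q ! t') # cs @ (filter Pd q ! Suc t') # ds"
        "\<forall>c\<in>set cs. \<not> Pd c" using Cons.IH by blast
      have "z # q = (z # as) @ (filter Pd (z # q) ! t) # cs @ (filter Pd (z # q) ! Suc t) # ds"
        using h Suc True by simp
      then show ?thesis using h by blast
    qed
  next
    case False
    then have "Suc t < length (filter Pd q)" using Cons.prems by auto
    then obtain as cs ds where h: "q = as @ (filter Pd q ! t) # cs @ (filter Pd q ! Suc t) # ds"
      "\<forall>c\<in>set cs. \<not> Pd c" using Cons.IH by blast
    have "z # q = (z # as) @ (filter Pd (z # q) ! t) # cs @ (filter Pd (z # q) ! Suc t) # ds"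
      using h False by simp
    then show ?thesis using h by blast
  qed
qed


definition sdv :: "'a graph \<Rightarrow> 'a graph \<Rightarrow> ('a set \<Rightarrow> 'a list) \<Rightarrow> bool" where
  "sdv G H \<phi> \<longleftrightarrow> (\<forall>e\<in>edges H. \<exists>u v. e = {u, v} \<and> xy_path G (\<phi> e) u v \<and> set (\<phi> e) \<inter> verts H = {u, v}) \<and>
     (\<forall>e\<in>edges H. \<forall>e'\<in>edges H. e \<noteq> e' \<longrightarrow> set (\<phi> e) \<inter> set (\<phi> e') \<subseteq> verts H) \<and>
     edges G = (\<Union>e\<in>edges H. path_edges (\<phi> e))"

lemma subdiv_sdv: assumes "subdivision_of G H" shows "\<exists>\<phi>. sdv G H \<phi>"
proof -
  from assms have "\<exists>\<phi>. (\<forall>e\<in>edges H. \<exists>u v. e = {u, v} \<and> xy_path G (\<phi> e) u v \<and>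
                              set (\<phi> e) \<inter> verts H = {u, v}) \<and>
          (\<forall>e\<in>edges H. \<forall>e'\<in>edges H. e \<noteq> e' \<longrightarrow> set (\<phi> e) \<inter> set (\<phi> e') \<subseteq> verts H) \<and>
          verts G = verts H \<union> (\<Union>e\<in>edges H. set (\<phi> e)) \<and>
          edges G = (\<Union>e\<in>edges H. path_edges (\<phi> e))" unfolding subdivision_of_def by (rule conjunct2)
  then obtain \<phi> where h: "(\<forall>e\<in>edges H. \<exists>u v. e = {u, v} \<and> xy_path G (\<phi> e) u v \<and>
                              set (\<phi> e) \<inter> verts H = {u, v})"
          "(\<forall>e\<in>edges H. \<forall>e'\<in>edges H. e \<noteq> e' \<longrightarrow> set (\<phi> e) \<inter> set (\<phi> e') \<subseteq> verts H)"
          "edges G = (\<Union>e\<in>edges H. path_edges (\<phi> e))" by (elim exE conjE)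
  have "sdv G H \<phi>" unfolding sdv_def by (intro conjI h)
  then show ?thesis by blast
qed

lemma sdv_phi:
  assumes "sdv G H \<phi>" "e \<in> edges H"
  shows "\<exists>u v. e = {u, v} \<and> xy_path G (\<phi> e) u v \<and> set (\<phi> e) \<inter> verts H = {u, v}"
proof -
  have "\<forall>e\<in>edges H. \<exists>u v. e = {u, v} \<and> xy_path G (\<phi> e) u v \<and> set (\<phi> e) \<inter> verts H = {u, v}"
    using assms(1) unfolding sdv_def by (rule conjunct1)
  then show ?thesis using assms(2) by (rule bspec)
qed

lemma sdv_disj:
  assumes "sdv G H \<phi>" "e \<in> edges H" "e' \<in> edges H" "e \<noteq> e'"
  shows "set (\<phi> e) \<inter> set (\<phi> e') \<subseteq> verts H"
proof -
  have "\<forall>e\<in>edges H. \<forall>e'\<in>edges H. e \<noteq> e' \<longrightarrow> set (\<phi> e) \<inter> set (\<phi> e') \<subseteq> verts H"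
    using assms(1) unfolding sdv_def by (elim conjE)
  then show ?thesis using assms(2-4) by blast
qed

lemma edge_in_phi: "sdv G H \<phi> \<Longrightarrow> f \<in> edges G \<Longrightarrow> \<exists>e\<in>edges H. f \<in> path_edges (\<phi> e)"
proof -
  assume "sdv G H \<phi>" "f \<in> edges G"
  moreover have "sdv G H \<phi> \<Longrightarrow> edges G = (\<Union>e\<in>edges H. path_edges (\<phi> e))" unfolding sdv_def by (elim conjE)
  ultimately have "f \<in> (\<Union>e\<in>edges H. path_edges (\<phi> e))" by simp
  then show ?thesis by (elim UN_E) (rule bexI)
qed

lemma unique_phi:
  assumes "sdv G H \<phi>" "e\<in>edges H" "e'\<in>edges H" "v \<notin> verts H" "v \<in> set (\<phi> e)" "v \<in> set (\<phi> e')"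
  shows "e = e'"
proof (rule ccontr)
  assume "e \<noteq> e'"
  then have "set (\<phi> e) \<inter> set (\<phi> e') \<subseteq> verts H" using sdv_disj[OF assms(1-3)] by blast
  then show False using assms(4-6) by blast
qed

lemma nonbranch_finite:
  assumes "sdv G H \<phi>" "v \<notin> verts H"
  shows "finite {f \<in> edges G. v \<in> f}"
proof (cases "\<exists>e\<in>edges H. v \<in> set (\<phi> e)")
  case True
  then obtain e0 where e0: "e0 \<in> edges H" "v \<in> set (\<phi> e0)" by blast
  have "{f \<in> edges G. v \<in> f} \<subseteq> path_edges (\<phi> e0)"
  proof
    fix f assume f: "f \<in> {f \<in> edges G. v \<in> f}"
    then obtain e where e: "e\<in>edges H" "f \<in> path_edges (\<phi> e)" using edge_in_phi[OF assms(1)] by blast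
    then have "v \<in> set (\<phi> e)" using pe_sub_set f by blast
    then have "e = e0" using unique_phi[OF assms(1) e(1) e0(1) assms(2)] e0 by blast
    then show "f \<in> path_edges (\<phi> e0)" using e by simp
  qed
  then show ?thesis using pe_finite finite_subset by blast
next
  case False
  have "{f \<in> edges G. v \<in> f} = {}"
  proof (rule ccontr)
    assume "{f \<in> edges G. v \<in> f} \<noteq> {}"
    then obtain f where f: "f \<in> edges G" "v \<in> f" by blast
    then obtain e where e: "e\<in>edges H" "f \<in> path_edges (\<phi> e)" using edge_in_phi[OF assms(1)] by blast
    then have "v \<in> set (\<phi> e)" using pe_sub_set f by blast
    then show False using False e by blast
  qed
  then show ?thesis by (metis finite.emptyI)
qed

lemma walk:
  assumes "sdv G H \<phi>"
  shows "path_edges (u # cs @ [w]) \<subseteq> edges G \<Longrightarrow> \<forall>c\<in>set cs. c \<notin> verts H \<Longrightarrow>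
    \<exists>e\<in>edges H. set (u # cs @ [w]) \<subseteq> set (\<phi> e) \<and> path_edges (u # cs @ [w]) \<subseteq> path_edges (\<phi> e)"
proof (induction cs arbitrary: u)
  case Nil
  then have "{u,w} \<in> edges G" by simp
  then obtain e where e: "e\<in>edges H" "{u,w} \<in> path_edges (\<phi> e)" using edge_in_phi[OF assms] by blast
  then have "{u,w} \<subseteq> set (\<phi> e)" using pe_sub_set by blast
  then show ?case using e by auto
next
  case (Cons c cs)
  have pe: "path_edges (u # (c # cs) @ [w]) = insert {u,c} (path_edges (c # cs @ [w]))" by simp
  then have "{u,c} \<in> edges G" using Cons.prems by simp
  then obtain e1 where e1: "e1\<in>edges H" "{u,c} \<in> path_edges (\<phi> e1)" using edge_in_phi[OF assms] by blast
  then have uc: "{u,c} \<subseteq> set (\<phi> e1)" using pe_sub_set by blast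
  have "path_edges (c # cs @ [w]) \<subseteq> edges G" using Cons.prems pe by auto
  moreover have "\<forall>c\<in>set cs. c \<notin> verts H" using Cons.prems by auto
  ultimately obtain e where e: "e\<in>edges H" "set (c # cs @ [w]) \<subseteq> set (\<phi> e)"
    "path_edges (c # cs @ [w]) \<subseteq> path_edges (\<phi> e)" using Cons.IH by blast
  have "c \<notin> verts H" using Cons.prems by auto
  moreover have "c \<in> set (\<phi> e)" using e by auto
  ultimately have "e1 = e" using unique_phi[OF assms e1(1) e(1)] uc by blast
  have "set (u # (c # cs) @ [w]) = insert u (set (c # cs @ [w]))" by simp
  then have "set (u # (c # cs) @ [w]) \<subseteq> set (\<phi> e)" using e(2) uc \<open>e1 = e\<close> by auto
  moreover have "path_edges (u # (c # cs) @ [w]) \<subseteq> path_edges (\<phi> e)"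
    using pe e(3) e1(2) \<open>e1 = e\<close> by auto
  ultimately show ?case using e(1) by blast
qed

lemma hpath:
  assumes "sdv G H \<phi>" "is_path G q" "hd q \<in> verts H" "last q \<in> verts H"
  shows "xy_path H (filter (\<lambda>v. v \<in> verts H) q) (hd q) (last q)"
proof -
  define Pd where "Pd = (\<lambda>v. v \<in> verts H)"
  define fq where "fq = filter Pd q"
  have qne: "q \<noteq> []" using assms(2) unfolding is_path_def by auto
  have dq: "distinct q" using assms(2) unfolding is_path_def by auto
  have peq: "path_edges q \<subseteq> edges G" using assms(2) unfolding is_path_def by auto
  have hd: "hd fq = hd q"
    using qne assms(3) unfolding fq_def Pd_def by (cases q) auto
  have last: "last fq = last q"
  proof -
    have "q = butlast q @ [last q]" using qne by simp
    then have "fq = filter Pd (butlast q) @ [last q]" unfolding fq_def Pd_def using assms(4)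
      by (metis filter.simps filter_append)
    then show ?thesis by simp
  qed
  have fne: "fq \<noteq> []" using qne assms(3) unfolding fq_def Pd_def by (cases q) auto
  have dfq: "distinct fq" unfolding fq_def using dq by simp
  have sfq: "set fq \<subseteq> verts H" unfolding fq_def Pd_def by auto
  have pfq: "path_edges fq \<subseteq> edges H"
  proof
    fix f assume "f \<in> path_edges fq"
    then obtain t where t: "f = {fq ! t, fq ! Suc t}" "Suc t < length fq"
      unfolding path_edges_def by blast
    define u where "u = fq ! t"
    define w where "w = fq ! Suc t"
    obtain as cs ds where d: "q = as @ u # cs @ w # ds" "\<forall>c\<in>set cs. \<not> Pd c"
      using filter_consec[OF t(2)[unfolded fq_def]] unfolding u_def w_def fq_def by blast
    have "q = as @ (u # cs @ [w]) @ ds" using d by simp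
    then have "path_edges (u # cs @ [w]) \<subseteq> path_edges q" using pe_infix[of "u # cs @ [w]" as ds] by simp
    then have "path_edges (u # cs @ [w]) \<subseteq> edges G" using peq by (rule subset_trans)
    moreover have "\<forall>c\<in>set cs. c \<notin> verts H" using d unfolding Pd_def by auto
    ultimately obtain e where e: "e\<in>edges H" "set (u # cs @ [w]) \<subseteq> set (\<phi> e)"
      using walk[OF assms(1)] by blast
    obtain u' v' where uv: "e = {u',v'}" "set (\<phi> e) \<inter> verts H = {u',v'}"
      using sdv_phi[OF assms(1) e(1)] by blast
    have uH: "u \<in> verts H" "w \<in> verts H" using sfq t unfolding u_def w_def by auto
    have "u \<noteq> w" unfolding u_def w_def using dfq t(2) nth_eq_iff_index_eq[of fq t "Suc t"] by auto
    moreover have "u \<in> {u',v'}" "w \<in> {u',v'}" using uv e uH by auto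
    ultimately have "{u,w} = e" using uv by auto
    then show "f \<in> edges H" using t e unfolding u_def w_def by simp
  qed
  show ?thesis unfolding xy_path_def is_path_def
    using hd last fne dfq sfq pfq unfolding fq_def Pd_def by auto
qed

lemma direct_edge:
  assumes "sdv G H \<phi>" "path_edges (a # cs @ [b]) \<subseteq> edges G" "\<forall>c\<in>set cs. c \<notin> verts H"
    "a \<in> verts H" "b \<in> verts H" "a \<noteq> b"
  shows "{a,b} \<in> edges H \<and> {a, hd (cs @ [b])} \<in> path_edges (\<phi> {a,b}) \<and>
         (a = hd (\<phi> {a,b}) \<or> a = last (\<phi> {a,b})) \<and> distinct (\<phi> {a,b})"
proof -
  obtain e where e: "e\<in>edges H" "set (a # cs @ [b]) \<subseteq> set (\<phi> e)"
    "path_edges (a # cs @ [b]) \<subseteq> path_edges (\<phi> e)"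
    using walk[OF assms(1-3)] by blast
  obtain u' v' where uv: "e = {u',v'}" "xy_path G (\<phi> e) u' v'" "set (\<phi> e) \<inter> verts H = {u',v'}"
    using sdv_phi[OF assms(1) e(1)] by blast
  have "a \<in> {u',v'}" "b \<in> {u',v'}" using uv e assms(4,5) by auto
  then have eab: "e = {a,b}" using uv(1) assms(6) by auto
  have "a # cs @ [b] = a # hd (cs @ [b]) # tl (cs @ [b])" by (cases cs) auto
  then have "{a, hd (cs @ [b])} \<in> path_edges (a # cs @ [b])" by (metis insertI1 pe_Cons2)
  then have "{a, hd (cs @ [b])} \<in> path_edges (\<phi> e)" using e by blast
  moreover have "a = hd (\<phi> e) \<or> a = last (\<phi> e)" using uv \<open>a \<in> {u',v'}\<close> unfolding xy_path_def by auto
  moreover have "distinct (\<phi> e)" using uv unfolding xy_path_def is_path_def by auto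
  ultimately show ?thesis using e eab by auto
qed



lemma glD_all:
  assumes "grain_line G x y L r P"
  shows "x \<noteq> y \<and> x \<in> verts G \<and> y \<in> verts G \<and>
     L \<subseteq> verts G \<and> countable L \<and> linear_order_on L r \<and>
     x \<in> L \<and> (\<forall>l\<in>L. (x, l) \<in> r) \<and> y \<in> L \<and> (\<forall>l\<in>L. (l, y) \<in> r) \<and>
     (\<forall>n. xy_path G (P n) x y) \<and>
     (\<forall>i j. i \<noteq> j \<longrightarrow> path_edges (P i) \<inter> path_edges (P j) = {}) \<and>
     L = {v. \<exists>m. {n. v \<in> set (P n)} = {m..}} \<and>
     (\<forall>n v. v \<in> set (P n) \<and> v \<notin> L \<longrightarrow> (\<forall>m. m \<noteq> n \<longrightarrow> v \<notin> set (P m))) \<and>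
     (\<forall>n. \<forall>a\<in>L_lt L P n. \<forall>b\<in>L_lt L P n. path_le (P n) a b \<longleftrightarrow> (a, b) \<in> r)"
  using assms unfolding grain_line_def .

lemma glD1: assumes "grain_line G x y L r P" shows "x \<noteq> y"
  using glD_all[OF assms] by (elim conjE)

lemma glD2: assumes "grain_line G x y L r P" shows "countable L"
  using glD_all[OF assms] by (elim conjE)

lemma glD3: assumes "grain_line G x y L r P" shows "linear_order_on L r"
  using glD_all[OF assms] by (elim conjE)

lemma glD4: assumes "grain_line G x y L r P" shows "x \<in> L"
  using glD_all[OF assms] by (elim conjE)

lemma glD5: assumes "grain_line G x y L r P" shows "y \<in> L"
  using glD_all[OF assms] by (elim conjE)

lemma glD6: assumes "grain_line G x y L r P" shows "\<forall>l\<in>L. (x, l) \<in> r"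
  using glD_all[OF assms] by (elim conjE)

lemma glD7: assumes "grain_line G x y L r P" shows "\<forall>l\<in>L. (l, y) \<in> r"
  using glD_all[OF assms] by (elim conjE)

lemma glD8: assumes "grain_line G x y L r P" shows "\<forall>n. xy_path G (P n) x y"
  using glD_all[OF assms] by (elim conjE)

lemma glD9: assumes "grain_line G x y L r P" shows "\<forall>i j. i \<noteq> j \<longrightarrow> path_edges (P i) \<inter> path_edges (P j) = {}"
  using glD_all[OF assms] by (elim conjE)

lemma glD10: assumes "grain_line G x y L r P" shows "L = {v. \<exists>m. {n. v \<in> set (P n)} = {m..}}"
  using glD_all[OF assms] by (elim conjE)

lemma glD11: assumes "grain_line G x y L r P" shows "\<forall>n v. v \<in> set (P n) \<and> v \<notin> L \<longrightarrow> (\<forall>m. m \<noteq> n \<longrightarrow> v \<notin> set (P m))"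
  using glD_all[OF assms] by (elim conjE)

lemma glD12: assumes "grain_line G x y L r P" shows "\<forall>n. \<forall>a\<in>L_lt L P n. \<forall>b\<in>L_lt L P n. path_le (P n) a b \<longleftrightarrow> (a, b) \<in> r"
  using glD_all[OF assms] by (elim conjE)

lemma glD13: assumes "grain_line G x y L r P" shows "x \<in> verts G"
  using glD_all[OF assms] by (elim conjE)

lemma glD14: assumes "grain_line G x y L r P" shows "y \<in> verts G"
  using glD_all[OF assms] by (elim conjE)

lemma glD15: assumes "grain_line G x y L r P" shows "L \<subseteq> verts G"
  using glD_all[OF assms] by (elim conjE)

lemmas glD = glD1 glD2 glD3 glD4 glD5 glD6 glD7 glD8 glD9 glD10 glD11 glD12 glD13 glD14 glD15

definition st :: "(nat \<Rightarrow> 'a list) \<Rightarrow> 'a \<Rightarrow> nat" where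
  "st P v = (LEAST n. v \<in> set (P n))"

lemma Lmem:
  assumes "grain_line G x y L r P" "v \<in> L"
  shows "v \<in> set (P n) \<longleftrightarrow> st P v \<le> n"
proof -
  have "v \<in> {v. \<exists>m. {n. v \<in> set (P n)} = {m..}}" using glD(10)[OF assms(1)] assms(2) by blast
  then obtain m where m: "{n. v \<in> set (P n)} = {m..}" by blast
  then have iff: "\<And>n. v \<in> set (P n) \<longleftrightarrow> m \<le> n" by (metis atLeast_iff mem_Collect_eq)
  have "st P v = m" unfolding st_def iff by (rule Least_equality) auto
  then show ?thesis using iff by simp
qed

lemma Llt:
  assumes "grain_line G x y L r P"
  shows "v \<in> L_lt L P n \<longleftrightarrow> v \<in> L \<and> st P v < n"
proof
  assume "v \<in> L_lt L P n"
  then obtain k where k: "v \<in> L" "k < n" "v \<in> set (P k)" unfolding L_lt_def by blast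
  then have "st P v \<le> k" using Lmem[OF assms k(1)] by blast
  then show "v \<in> L \<and> st P v < n" using k by auto
next
  assume h: "v \<in> L \<and> st P v < n"
  then have "v \<in> set (P (st P v))" using Lmem[OF assms] by blast
  then show "v \<in> L_lt L P n" unfolding L_lt_def using h by blast
qed

lemma path_len2:
  assumes "xy_path G p x y" "x \<noteq> y"
  shows "2 \<le> length p"
proof -
  have ne: "p \<noteq> []" and hd: "hd p = x" and la: "last p = y"
    using assms(1) unfolding xy_path_def is_path_def by auto
  show ?thesis
  proof (rule ccontr)
    assume "\<not> 2 \<le> length p"
    moreover have "0 < length p" using ne by simp
    ultimately have "length p = 1" by linarith
    then obtain z where "p = [z]" by (cases p) auto
    then show False using hd la assms(2) by simp
  qed
qed

lemma L_branch:
  assumes gl: "grain_line G x y L r P" and sd: "sdv G H \<phi>" and v: "v \<in> L"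
  shows "v \<in> verts H"
proof (rule ccontr)
  assume nv: "v \<notin> verts H"
  have fin: "finite {f \<in> edges G. v \<in> f}" by (rule nonbranch_finite[OF sd nv])
  have ex: "\<exists>f. f \<in> path_edges (P n) \<and> v \<in> f" if "st P v \<le> n" for n
  proof -
    have xy: "xy_path G (P n) x y" using glD(8)[OF gl] by blast
    have "2 \<le> length (P n)" by (rule path_len2[OF xy glD(1)[OF gl]])
    moreover have "v \<in> set (P n)" using Lmem[OF gl v] that by blast
    ultimately have "\<exists>f\<in>path_edges (P n). v \<in> f" by (rule edge_at)
    then show ?thesis by blast
  qed
  define F where "F = (\<lambda>n. SOME f. f \<in> path_edges (P n) \<and> v \<in> f)"
  have F: "F n \<in> path_edges (P n) \<and> v \<in> F n" if "st P v \<le> n" for n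
    unfolding F_def using someI_ex[OF ex[OF that]] .
  have sub: "F ` {st P v..} \<subseteq> {f \<in> edges G. v \<in> f}"
  proof
    fix f assume "f \<in> F ` {st P v..}"
    then obtain n where n: "st P v \<le> n" "f = F n" by auto
    have "path_edges (P n) \<subseteq> edges G" using glD(8)[OF gl] unfolding xy_path_def is_path_def by blast
    then show "f \<in> {f \<in> edges G. v \<in> f}" using F[OF n(1)] n(2) by blast
  qed
  have inj: "inj_on F {st P v..}"
  proof (rule inj_onI)
    fix n m assume nm: "n \<in> {st P v..}" "m \<in> {st P v..}" "F n = F m"
    show "n = m"
    proof (rule ccontr)
      assume "n \<noteq> m"
      then have "path_edges (P n) \<inter> path_edges (P m) = {}" using glD(9)[OF gl] by blast
      moreover have "F n \<in> path_edges (P n)" using F[of n] nm(1) by simp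
      moreover have "F m \<in> path_edges (P m)" using F[of m] nm(2) by simp
      ultimately show False using nm(3) by auto
    qed
  qed
  have "infinite (F ` {st P v..})"
    using inj finite_imageD infinite_Ici by blast
  then show False using sub fin finite_subset by blast
qed

lemma first_edge: "{a, hd (cs @ [b])} \<in> path_edges (a # cs @ [b])"
proof -
  have "a # cs @ [b] = a # hd (cs @ [b]) # tl (cs @ [b])" by (cases cs) auto
  then show ?thesis by (metis insertI1 pe_Cons2)
qed



lemma density:
  assumes gl: "grain_line G x y L r P" and sd: "sdv G H \<phi>" and PiH: "Pi_graph H"
    and aL: "a \<in> L" and bL: "b \<in> L" and ab: "(a,b) \<in> r" and anb: "a \<noteq> b"
  shows "\<exists>c\<in>L. (a,c)\<in>r \<and> a\<noteq>c \<and> (c,b)\<in>r \<and> c\<noteq>b"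
proof (rule ccontr)
  assume nb: "\<not> (\<exists>c\<in>L. (a,c)\<in>r \<and> a\<noteq>c \<and> (c,b)\<in>r \<and> c\<noteq>b)"
  have aH: "a \<in> verts H" by (rule L_branch[OF gl sd aL])
  have bH: "b \<in> verts H" by (rule L_branch[OF gl sd bL])
  have GL3: "\<forall>n. \<forall>a\<in>L_lt L P n. \<forall>b\<in>L_lt L P n. path_le (P n) a b \<longleftrightarrow> (a, b) \<in> r"
    by (rule glD(12)[OF gl])
  have GL2: "\<forall>n v. v \<in> set (P n) \<and> v \<notin> L \<longrightarrow> (\<forall>m. m \<noteq> n \<longrightarrow> v \<notin> set (P m))"
    by (rule glD(11)[OF gl])
  have xyP: "\<And>n. xy_path G (P n) x y" using glD(8)[OF gl] by blast
  have disjP: "\<And>i j. i \<noteq> j \<Longrightarrow> path_edges (P i) \<inter> path_edges (P j) = {}"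
    using glD(9)[OF gl] by blast
  define N where "N = Suc (max (st P a) (st P b))"
  have abLt: "a \<in> L_lt L P n \<and> b \<in> L_lt L P n" if "N \<le> n" for n
    using Llt[OF gl] aL bL that unfolding N_def by auto
  have dec: "\<exists>cs. N \<le> n \<longrightarrow> (\<exists>as ds. P n = as @ a # cs @ b # ds)" for n
  proof (cases "N \<le> n")
    case True
    have "path_le (P n) a b" using GL3 abLt[OF True] ab by blast
    then obtain as bs where h: "P n = as @ a # bs" "b \<in> set (a # bs)"
      unfolding path_le_iff by blast
    then have "b \<in> set bs" using anb by simp
    then obtain cs ds where "bs = cs @ b # ds" by (meson split_list)
    then show ?thesis using h by blast
  qed simp
  obtain CS where CS: "\<And>n. N \<le> n \<Longrightarrow> \<exists>as ds. P n = as @ a # CS n @ b # ds"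
  proof -
    have "\<forall>n. \<exists>cs. N \<le> n \<longrightarrow> (\<exists>as ds. P n = as @ a # cs @ b # ds)" using dec by blast
    then obtain CS where "\<forall>n. N \<le> n \<longrightarrow> (\<exists>as ds. P n = as @ a # CS n @ b # ds)"
      by (rule choice[THEN exE])
    then show ?thesis using that by blast
  qed
  define Q where "Q = (\<lambda>n. a # CS n @ [b])"
  have Qf: "xy_path G (Q n) a b \<and> path_edges (Q n) \<subseteq> path_edges (P n) \<and> set (Q n) \<subseteq> set (P n)
     \<and> distinct (Q n)" if Nn: "N \<le> n" for n
  proof -
    obtain as ds where d: "P n = as @ a # CS n @ b # ds" using CS[OF Nn] by blast
    then have d2: "P n = as @ Q n @ ds" unfolding Q_def by simp
    have pP: "is_path G (P n)" using xyP[of n] unfolding xy_path_def by blast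
    have pe: "path_edges (Q n) \<subseteq> path_edges (P n)" using d2 pe_infix[of "Q n" as ds] by simp
    have se: "set (Q n) \<subseteq> set (P n)" using d2 by auto
    have di: "distinct (Q n)" using pP d2 unfolding is_path_def by auto
    have "Q n \<noteq> []" "hd (Q n) = a" "last (Q n) = b" unfolding Q_def by auto
    moreover have "set (Q n) \<subseteq> verts G" using se pP unfolding is_path_def by blast
    moreover have "path_edges (Q n) \<subseteq> edges G" using pe pP unfolding is_path_def by blast
    ultimately have "xy_path G (Q n) a b" using di unfolding xy_path_def is_path_def by blast
    then show ?thesis using pe se di by blast
  qed
  have inner: False if nn: "N \<le> n" "n < n'" and c: "c \<in> set (CS n)" "c \<in> set (CS n')" for n n' c
  proof -
    have N': "N \<le> n'" using nn by simp
    have cn: "c \<in> set (P n)" using Qf[OF nn(1)] c(1) unfolding Q_def by auto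
    have cn': "c \<in> set (P n')" using Qf[OF N'] c(2) unfolding Q_def by auto
    have nn': "n' \<noteq> n" using nn(2) by simp
    have cL: "c \<in> L"
    proof (rule ccontr)
      assume "c \<notin> L"
      then have "c \<notin> set (P n')" using GL2 cn nn' by blast
      then show False using cn' by simp
    qed
    have "st P c \<le> n" using Lmem[OF gl cL] cn by blast
    then have cLt: "c \<in> L_lt L P n'" using Llt[OF gl] cL nn(2) by auto
    obtain as ds where d: "P n' = as @ a # CS n' @ b # ds" using CS[OF N'] by blast
    have "c \<in> set (a # CS n' @ b # ds)" using c(2) by simp
    then have le1: "path_le (P n') a c" unfolding path_le_iff using d by blast
    obtain c1 c2 where "CS n' = c1 @ c # c2" using c(2) by (meson split_list)
    then have eq: "P n' = (as @ a # c1) @ c # (c2 @ b # ds)" using d by simp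
    have "b \<in> set (c # c2 @ b # ds)" by simp
    then have le2: "path_le (P n') c b" unfolding path_le_iff using eq by blast
    have r1: "(a,c) \<in> r" using GL3 cLt abLt[OF N'] le1 by blast
    have r2: "(c,b) \<in> r" using GL3 cLt abLt[OF N'] le2 by blast
    have "a \<noteq> c" "c \<noteq> b" using Qf[OF N'] c(2) unfolding Q_def by auto
    then have "(a,c) \<in> r \<and> a\<noteq>c \<and> (c,b)\<in>r \<and> c\<noteq>b" using r1 r2 by blast
    then show False using nb cL by blast
  qed
  have disjQ: "set (Q n) \<inter> set (Q n') \<subseteq> {a,b}" if "N \<le> n" "N \<le> n'" "n \<noteq> n'" for n n'
  proof
    fix c assume c: "c \<in> set (Q n) \<inter> set (Q n')"
    show "c \<in> {a,b}"
    proof (rule ccontr)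
      assume "c \<notin> {a,b}"
      then have "c \<in> set (CS n)" "c \<in> set (CS n')" using c unfolding Q_def by auto
      then show False using inner that by (metis linorder_neqE_nat)
    qed
  qed
  define R where "R = (\<lambda>k. filter (\<lambda>v. v \<in> verts H) (Q (N + k)))"
  have Rp: "xy_path H (R k) a b" for k
  proof -
    have q: "xy_path G (Q (N+k)) a b" using Qf[of "N+k"] by simp
    then have "is_path G (Q (N+k))" "hd (Q (N+k)) = a" "last (Q (N+k)) = b"
      unfolding xy_path_def by auto
    then show ?thesis using hpath[OF sd, of "Q (N+k)"] aH bH unfolding R_def by simp
  qed
  have Rs: "set (R k) \<subseteq> set (Q (N+k))" for k unfolding R_def by auto
  have Rdisj: "set (R i) \<inter> set (R j) \<subseteq> {a,b}" if "i \<noteq> j" for i j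
    using Rs[of i] Rs[of j] disjQ[of "N+i" "N+j"] that by auto
  have nonbr: "\<forall>c\<in>set (CS (N+i)). c \<notin> verts H" if "R i = R j" "i \<noteq> j" for i j
  proof
    fix c assume c: "c \<in> set (CS (N+i))"
    show "c \<notin> verts H"
    proof
      assume cH: "c \<in> verts H"
      then have "c \<in> set (R i)" using c unfolding R_def Q_def by auto
      then have "c \<in> set (R i) \<inter> set (R j)" using that by simp
      then have "c \<in> {a,b}" using Rdisj that by blast
      moreover have "distinct (Q (N+i))" using Qf[of "N+i"] by simp
      ultimately show False using c unfolding Q_def by auto
    qed
  qed
  have fe: "{a, hd (CS (N+i) @ [b])} \<in> path_edges (\<phi> {a,b}) \<and> {a, hd (CS (N+i) @ [b])} \<in> path_edges (P (N+i))
      \<and> (a = hd (\<phi> {a,b}) \<or> a = last (\<phi> {a,b})) \<and> distinct (\<phi> {a,b})"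
    if "R i = R j" "i \<noteq> j" for i j
  proof -
    have q: "path_edges (Q (N+i)) \<subseteq> path_edges (P (N+i))" "xy_path G (Q (N+i)) a b"
      using Qf[of "N+i"] by simp_all
    then have "path_edges (a # CS (N+i) @ [b]) \<subseteq> edges G"
      unfolding Q_def xy_path_def is_path_def by blast
    then have de: "{a,b} \<in> edges H \<and> {a, hd (CS (N+i) @ [b])} \<in> path_edges (\<phi> {a,b}) \<and>
         (a = hd (\<phi> {a,b}) \<or> a = last (\<phi> {a,b})) \<and> distinct (\<phi> {a,b})"
      using direct_edge[OF sd _ nonbr[OF that] aH bH anb] by blast
    have "{a, hd (CS (N+i) @ [b])} \<in> path_edges (Q (N+i))" unfolding Q_def by (rule first_edge)
    then have "{a, hd (CS (N+i) @ [b])} \<in> path_edges (P (N+i))" using q(1) by blast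
    then show ?thesis using de by blast
  qed
  have Rinj: "inj R"
  proof (rule injI)
    fix i j assume Rij: "R i = R j"
    show "i = j"
    proof (rule ccontr)
      assume ij: "i \<noteq> j"
      have Rji: "R j = R i" using Rij by simp
      have ji: "j \<noteq> i" using ij by simp
      define f1 where "f1 = {a, hd (CS (N+i) @ [b])}"
      define f2 where "f2 = {a, hd (CS (N+j) @ [b])}"
      have h1: "f1 \<in> path_edges (\<phi> {a,b})" "f1 \<in> path_edges (P (N+i))"
        "a = hd (\<phi> {a,b}) \<or> a = last (\<phi> {a,b})" "distinct (\<phi> {a,b})"
        using fe[OF Rij ij] unfolding f1_def by blast+
      have h2: "f2 \<in> path_edges (\<phi> {a,b})" "f2 \<in> path_edges (P (N+j))"
        using fe[OF Rji ji] unfolding f2_def by blast+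
      have "f1 = f2"
        by (rule end_edge_unique[OF h1(4) h1(1) h2(1) _ _ h1(3)]) (simp_all add: f1_def f2_def)
      then have "f1 \<in> path_edges (P (N+i)) \<inter> path_edges (P (N+j))" using h1(2) h2(2) by simp
      moreover have "N + i \<noteq> N + j" using ij by simp
      ultimately show False using disjP by blast
    qed
  qed
  have "\<exists>u v P. u \<in> verts H \<and> v \<in> verts H \<and> u \<noteq> v \<and> inj P \<and>
           (\<forall>n::nat. xy_path H (P n) u v) \<and>
           (\<forall>i j. i \<noteq> j \<longrightarrow> set (P i) \<inter> set (P j) \<subseteq> {u, v})"
    using aH bH anb Rinj Rp Rdisj by blast
  then show False using PiH unfolding Pi_graph_def by blast
qed



lemma wild_of_dense:
  assumes cnt: "countable L" and lo: "linear_order_on L r" and xL: "x \<in> L" and yL: "y \<in> L"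
    and xy: "x \<noteq> y" and xmin: "\<forall>l\<in>L. (x, l) \<in> r" and ymax: "\<forall>l\<in>L. (l, y) \<in> r"
    and dense: "\<forall>a\<in>L. \<forall>b\<in>L. (a,b)\<in>r \<and> a\<noteq>b \<longrightarrow> (\<exists>c\<in>L. (a,c)\<in>r \<and> a\<noteq>c \<and> (c,b)\<in>r \<and> c\<noteq>b)"
  shows "wild L r"
proof -
  have rL: "\<And>a. a\<in>L \<Longrightarrow> (a,a)\<in>r" using lo unfolding linear_order_on_def partial_order_on_def
      preorder_on_def refl_on_def by blast
  have tr: "trans r" using lo unfolding linear_order_on_def partial_order_on_def preorder_on_def by blast
  have an: "antisym r" using lo unfolding linear_order_on_def partial_order_on_def by blast
  have anD: "\<And>a b. (a,b)\<in>r \<Longrightarrow> (b,a)\<in>r \<Longrightarrow> a = b" using an by (rule antisymD)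
  have to: "\<And>a b. a\<in>L \<Longrightarrow> b\<in>L \<Longrightarrow> (a,b)\<in>r \<or> (b,a)\<in>r"
  proof -
    fix a b assume "a\<in>L" "b\<in>L"
    have "total_on L r" using lo unfolding linear_order_on_def by blast
    then show "(a,b)\<in>r \<or> (b,a)\<in>r" using rL \<open>a\<in>L\<close> \<open>b\<in>L\<close> unfolding total_on_def by metis
  qed
  define A where "A = L - {x,y}"
  have linA: "lin A r" unfolding lin_def A_def using rL tr an to by blast
  have cA: "countable A" unfolding A_def using cnt by simp
  obtain c0 where c0: "c0\<in>L" "(x,c0)\<in>r" "x\<noteq>c0" "(c0,y)\<in>r" "c0\<noteq>y"
    using dense xL yL xmin xy by blast
  have neA: "A \<noteq> {}" unfolding A_def using c0 by blast
  have xa: "(x,a)\<in>r \<and> x \<noteq> a" if "a\<in>A" for a using that xmin unfolding A_def by auto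
  have ay: "(a,y)\<in>r \<and> a \<noteq> y" if "a\<in>A" for a using that ymax unfolding A_def by auto
  have inA: "c \<in> A" if "c\<in>L" "(a,c)\<in>r" "(c,b)\<in>r" "a\<noteq>c" "c\<noteq>b" "a\<in>L" "b\<in>L" for a b c
  proof -
    have "c \<noteq> x"
    proof
      assume "c = x"
      then have "(a,x)\<in>r" using that by simp
      then have "a = x" using xmin that(6) anD by blast
      then show False using that \<open>c = x\<close> by simp
    qed
    moreover have "c \<noteq> y"
    proof
      assume "c = y"
      then have "(y,b)\<in>r" using that by simp
      then have "b = y" using ymax that(7) anD by blast
      then show False using that \<open>c = y\<close> by simp
    qed
    ultimately show ?thesis unfolding A_def using that by blast
  qed
  have denseA: "\<forall>a\<in>A. \<forall>b\<in>A. (a,b)\<in>r \<and> a\<noteq>b \<longrightarrow> (\<exists>c\<in>A. (a,c)\<in>r \<and> a\<noteq>c \<and> (c,b)\<in>r \<and> c\<noteq>b)"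
  proof (intro ballI impI)
    fix a b assume ab: "a\<in>A" "b\<in>A" "(a,b)\<in>r \<and> a\<noteq>b"
    have "a\<in>L" "b\<in>L" using ab unfolding A_def by auto
    then obtain c where c: "c\<in>L" "(a,c)\<in>r" "a\<noteq>c" "(c,b)\<in>r" "c\<noteq>b" using dense ab(3) by blast
    then have "c \<in> A" using inA[of c a b] \<open>a\<in>L\<close> \<open>b\<in>L\<close> by blast
    then show "\<exists>c\<in>A. (a,c)\<in>r \<and> a\<noteq>c \<and> (c,b)\<in>r \<and> c\<noteq>b" using c by blast
  qed
  have nominA: "\<forall>a\<in>A. \<exists>c\<in>A. (c,a)\<in>r \<and> c\<noteq>a"
  proof
    fix a assume a: "a\<in>A"
    have aL: "a\<in>L" using a unfolding A_def by auto
    obtain c where c: "c\<in>L" "(x,c)\<in>r" "x\<noteq>c" "(c,a)\<in>r" "c\<noteq>a" using dense xa[OF a] xL aL by blast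
    then have "c \<in> A" using inA[of c x a] xL aL by blast
    then show "\<exists>c\<in>A. (c,a)\<in>r \<and> c\<noteq>a" using c by blast
  qed
  have nomaxA: "\<forall>a\<in>A. \<exists>c\<in>A. (a,c)\<in>r \<and> c\<noteq>a"
  proof
    fix a assume a: "a\<in>A"
    have aL: "a\<in>L" using a unfolding A_def by auto
    obtain c where c: "c\<in>L" "(a,c)\<in>r" "a\<noteq>c" "(c,y)\<in>r" "c\<noteq>y" using dense ay[OF a] yL aL by blast
    then have "c \<in> A" using inA[of c a y] yL aL by blast
    then show "\<exists>c\<in>A. (a,c)\<in>r \<and> c\<noteq>a" using c by blast
  qed
  obtain f where f: "bij_betw f A {q::rat. 0<q \<and> q<1}" "\<forall>a\<in>A. \<forall>b\<in>A. (a,b)\<in>r \<longleftrightarrow> f a \<le> f b"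
    using forth_iso[OF cA neA linA denseA nominA nomaxA] by blast
  have fr: "0 < f a \<and> f a < 1" if "a\<in>A" for a using f(1) that unfolding bij_betw_def by blast
  define F where "F = (\<lambda>a. if a = x then 0 else if a = y then 1 else f a)"
  have FA: "F a = f a" if "a\<in>A" for a using that unfolding F_def A_def by auto
  have Fx: "F x = 0" unfolding F_def by simp
  have Fy: "F y = 1" unfolding F_def using xy by simp
  have Frange: "0 \<le> F a \<and> F a \<le> 1" if "a\<in>L" for a
  proof (cases "a \<in> A")
    case True then show ?thesis using FA fr by fastforce
  next
    case False then have "a = x \<or> a = y" using that unfolding A_def by blast
    then show ?thesis using Fx Fy by auto
  qed
  have F0: "F a = 0 \<longleftrightarrow> a = x" if "a\<in>L" for a
  proof (cases "a \<in> A")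
    case True then show ?thesis using FA fr xa by fastforce
  next
    case False then have "a = x \<or> a = y" using that unfolding A_def by blast
    then show ?thesis using Fx Fy xy by auto
  qed
  have F1: "F a = 1 \<longleftrightarrow> a = y" if "a\<in>L" for a
  proof (cases "a \<in> A")
    case True then show ?thesis using FA fr ay by fastforce
  next
    case False then have "a = x \<or> a = y" using that unfolding A_def by blast
    then show ?thesis using Fx Fy xy by auto
  qed
  have ord: "(a,b)\<in>r \<longleftrightarrow> F a \<le> F b" if ab: "a\<in>L" "b\<in>L" for a b
  proof (cases "a \<in> A \<and> b \<in> A")
    case True then show ?thesis using f(2) FA by simp
  next
    case False
    then consider "a = x" | "a = y" | "b = x" | "b = y" using ab unfolding A_def by blast
    then show ?thesis
    proof cases
      case 1 then show ?thesis using xmin ab Fx Frange by simp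
    next
      case 2
      have "(y,b)\<in>r \<longleftrightarrow> b = y" using ymax ab anD rL yL by blast
      moreover have "1 \<le> F b \<longleftrightarrow> b = y" using F1[OF ab(2)] Frange[OF ab(2)] by auto
      ultimately show ?thesis using 2 Fy by simp
    next
      case 3
      have "(a,x)\<in>r \<longleftrightarrow> a = x" using xmin ab anD rL xL by blast
      moreover have "F a \<le> 0 \<longleftrightarrow> a = x" using F0[OF ab(1)] Frange[OF ab(1)] by auto
      ultimately show ?thesis using 3 Fx by simp
    next
      case 4 then show ?thesis using ymax ab Fy Frange by simp
    qed
  qed
  have inj: "inj_on F L"
  proof (rule inj_onI)
    fix a b assume "a\<in>L" "b\<in>L" "F a = F b"
    then have "(a,b)\<in>r" "(b,a)\<in>r" using ord by auto
    then show "a = b" by (rule anD)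
  qed
  have img: "F ` L = {q :: rat. 0 \<le> q \<and> q \<le> 1}"
  proof
    show "F ` L \<subseteq> {q. 0 \<le> q \<and> q \<le> 1}" using Frange by blast
  next
    show "{q :: rat. 0 \<le> q \<and> q \<le> 1} \<subseteq> F ` L"
    proof
      fix q :: rat assume q: "q \<in> {q. 0 \<le> q \<and> q \<le> 1}"
      show "q \<in> F ` L"
      proof (cases "q = 0 \<or> q = 1")
        case True then show ?thesis using Fx Fy xL yL by (metis image_eqI)
      next
        case False
        then have "q \<in> {q::rat. 0<q \<and> q<1}" using q by auto
        then have "q \<in> f ` A" using f(1) unfolding bij_betw_def by blast
        then obtain a where a: "a\<in>A" "q = f a" by blast
        then have "q = F a" "a \<in> L" using FA unfolding A_def by auto
        then show ?thesis by blast
      qed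
    qed
  qed
  have "bij_betw F L {q :: rat. 0 \<le> q \<and> q \<le> 1}" unfolding bij_betw_def using inj img by blast
  then show ?thesis unfolding wild_def using ord by blast
qed



lemma subseq_part:
  assumes gl: "grain_line G x y L r P"
    and dense: "\<forall>a\<in>L. \<forall>b\<in>L. (a,b)\<in>r \<and> a\<noteq>b \<longrightarrow> (\<exists>c\<in>L. (a,c)\<in>r \<and> a\<noteq>c \<and> (c,b)\<in>r \<and> c\<noteq>b)"
  shows "\<exists>ns :: nat \<Rightarrow> nat. strict_mono ns \<and> grain_line G x y L r (P \<circ> ns) \<and>
                              wildly_presented L r (P \<circ> ns)"
proof -
  have GL3: "\<forall>n. \<forall>a\<in>L_lt L P n. \<forall>b\<in>L_lt L P n. path_le (P n) a b \<longleftrightarrow> (a, b) \<in> r"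
    by (rule glD(12)[OF gl])
  have GL2: "\<forall>n v. v \<in> set (P n) \<and> v \<notin> L \<longrightarrow> (\<forall>m. m \<noteq> n \<longrightarrow> v \<notin> set (P m))"
    by (rule glD(11)[OF gl])
  define cc where "cc = (\<lambda>l1 l2. SOME c. c\<in>L \<and> (l1,c)\<in>r \<and> l1\<noteq>c \<and> (c,l2)\<in>r \<and> c\<noteq>l2)"
  have cc: "cc l1 l2 \<in> L \<and> (l1, cc l1 l2)\<in>r \<and> l1 \<noteq> cc l1 l2 \<and> (cc l1 l2, l2)\<in>r \<and> cc l1 l2 \<noteq> l2"
    if "l1\<in>L" "l2\<in>L" "(l1,l2)\<in>r" "l1\<noteq>l2" for l1 l2
  proof -
    have "\<exists>c. c\<in>L \<and> (l1,c)\<in>r \<and> l1\<noteq>c \<and> (c,l2)\<in>r \<and> c\<noteq>l2" using dense that by blast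
    then show ?thesis unfolding cc_def by (rule someI_ex)
  qed
  define Fm where "Fm = (\<lambda>m. L_lt L P (Suc m))"
  have finFm: "finite (Fm m)" for m
  proof -
    have "Fm m \<subseteq> (\<Union>k<Suc m. set (P k))" unfolding Fm_def L_lt_def by blast
    moreover have "finite (\<Union>k<Suc m. set (P k))" by simp
    ultimately show ?thesis by (rule finite_subset)
  qed
  define Bd where "Bd = (\<lambda>m. Max (insert 0 ((\<lambda>(l1,l2). st P (cc l1 l2) + st P l1 + st P l2) ` (Fm m \<times> Fm m))))"
  have Bd: "st P (cc l1 l2) + st P l1 + st P l2 \<le> Bd m" if "l1 \<in> Fm m" "l2 \<in> Fm m" for l1 l2 m
  proof -
    have "finite (insert 0 ((\<lambda>(l1,l2). st P (cc l1 l2) + st P l1 + st P l2) ` (Fm m \<times> Fm m)))"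
      using finFm by simp
    moreover have "st P (cc l1 l2) + st P l1 + st P l2 \<in>
        insert 0 ((\<lambda>(l1,l2). st P (cc l1 l2) + st P l1 + st P l2) ` (Fm m \<times> Fm m))"
      using that by force
    ultimately show ?thesis unfolding Bd_def by (rule Max_ge)
  qed
  define ns where "ns = rec_nat 0 (\<lambda>_ m. Suc (m + Bd m))"
  have ns0: "ns 0 = 0" unfolding ns_def by simp
  have nsS: "ns (Suc k) = Suc (ns k + Bd (ns k))" for k unfolding ns_def by simp
  have sm: "strict_mono ns" unfolding strict_mono_Suc_iff using nsS by simp
  have nsle: "ns j \<le> ns k" if "j \<le> k" for j k using sm that by (simp add: strict_mono_less_eq)
  have nslt: "ns j < ns k \<longleftrightarrow> j < k" for j k using sm by (simp add: strict_mono_less)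
  have nsinj: "ns i \<noteq> ns j" if "i \<noteq> j" for i j using sm that by (metis strict_mono_eq)
  have sub1: "L_lt L (P \<circ> ns) k \<subseteq> L_lt L P (ns k)" for k
  proof
    fix v assume "v \<in> L_lt L (P \<circ> ns) k"
    then obtain j where j: "v\<in>L" "j < k" "v \<in> set (P (ns j))" unfolding L_lt_def by auto
    then have "ns j < ns k" using nslt by blast
    then show "v \<in> L_lt L P (ns k)" unfolding L_lt_def using j by blast
  qed
  have sub2: "L_lt L (P \<circ> ns) (Suc k) \<subseteq> Fm (ns k)" for k
  proof
    fix v assume "v \<in> L_lt L (P \<circ> ns) (Suc k)"
    then obtain j where j: "v\<in>L" "j < Suc k" "v \<in> set (P (ns j))" unfolding L_lt_def by auto
    then have "ns j < Suc (ns k)" using nsle[of j k] by simp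
    then show "v \<in> Fm (ns k)" unfolding L_lt_def Fm_def using j by blast
  qed
  have wp: "wildly_presented L r (P \<circ> ns)"
    unfolding wildly_presented_def
  proof (intro allI ballI impI)
    fix n l1 l2 assume l1: "l1 \<in> L_lt L (P \<circ> ns) n" and l2: "l2 \<in> L_lt L (P \<circ> ns) n"
      and lr: "(l1, l2) \<in> r \<and> l1 \<noteq> l2"
    have "n \<noteq> 0" using l1 unfolding L_lt_def by auto
    then obtain k where k: "n = Suc k" by (cases n) auto
    have f1: "l1 \<in> Fm (ns k)" "l2 \<in> Fm (ns k)" using sub2 l1 l2 k by blast+
    have L12: "l1 \<in> L" "l2 \<in> L" using l1 l2 unfolding L_lt_def by auto
    define v where "v = cc l1 l2"
    have v: "v \<in> L" "(l1, v)\<in>r" "l1 \<noteq> v" "(v, l2)\<in>r" "v \<noteq> l2"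
      using cc[OF L12 conjunct1[OF lr] conjunct2[OF lr]] unfolding v_def by auto
    have b: "st P v + st P l1 + st P l2 \<le> Bd (ns k)" using Bd[OF f1] unfolding v_def .
    have nsn: "ns n = Suc (ns k + Bd (ns k))" using nsS k by simp
    have "v \<in> L_lt L P (ns n)" "l1 \<in> L_lt L P (ns n)" "l2 \<in> L_lt L P (ns n)"
      using Llt[OF gl] v(1) L12 b nsn by auto
    then have "path_le (P (ns n)) l1 v" "path_le (P (ns n)) v l2" using GL3 v by blast+
    then have "v \<in> subpath_verts ((P \<circ> ns) n) l1 l2" unfolding subpath_verts_def by simp
    then show "\<exists>v\<in>subpath_verts ((P \<circ> ns) n) l1 l2. v \<in> L \<and> (l1, v) \<in> r \<and> v \<noteq> l1 \<and> (v, l2) \<in> r \<and> v \<noteq> l2"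
      using v by blast
  qed
  have GL1: "L = {v. \<exists>m. {n. v \<in> set ((P \<circ> ns) n)} = {m..}}"
  proof
    show "L \<subseteq> {v. \<exists>m. {n. v \<in> set ((P \<circ> ns) n)} = {m..}}"
    proof
      fix v assume vL: "v \<in> L"
      define m where "m = (LEAST k. st P v \<le> ns k)"
      have ex: "st P v \<le> ns (st P v)" using strict_mono_imp_increasing[OF sm] .
      have m1: "st P v \<le> ns m" unfolding m_def using ex by (rule LeastI)
      have "{n. v \<in> set ((P \<circ> ns) n)} = {m..}"
      proof (rule set_eqI)
        fix n
        have "v \<in> set ((P \<circ> ns) n) \<longleftrightarrow> st P v \<le> ns n" using Lmem[OF gl vL] by simp
        also have "\<dots> \<longleftrightarrow> m \<le> n"
        proof
          assume "st P v \<le> ns n" then show "m \<le> n" unfolding m_def by (rule Least_le)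
        next
          assume "m \<le> n" then show "st P v \<le> ns n" using m1 nsle[of m n] by simp
        qed
        finally show "n \<in> {n. v \<in> set ((P \<circ> ns) n)} \<longleftrightarrow> n \<in> {m..}" by simp
      qed
      then show "v \<in> {v. \<exists>m. {n. v \<in> set ((P \<circ> ns) n)} = {m..}}" by blast
    qed
  next
    show "{v. \<exists>m. {n. v \<in> set ((P \<circ> ns) n)} = {m..}} \<subseteq> L"
    proof
      fix v assume "v \<in> {v. \<exists>m. {n. v \<in> set ((P \<circ> ns) n)} = {m..}}"
      then obtain m where m: "{n. v \<in> set ((P \<circ> ns) n)} = {m..}" by blast
      have "{m..} \<subseteq> {n. v \<in> set ((P \<circ> ns) n)}" using m by (rule equalityD2)
      moreover have "m \<in> {m..}" "Suc m \<in> {m..}" by auto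
      ultimately have "m \<in> {n. v \<in> set ((P \<circ> ns) n)}" "Suc m \<in> {n. v \<in> set ((P \<circ> ns) n)}" by blast+
      then have v1: "v \<in> set (P (ns m))" "v \<in> set (P (ns (Suc m)))" by auto
      have "ns (Suc m) \<noteq> ns m" using nsinj[of "Suc m" m] by simp
      show "v \<in> L"
      proof (rule ccontr)
        assume "v \<notin> L"
        then have "v \<notin> set (P (ns (Suc m)))" using GL2 v1(1) \<open>ns (Suc m) \<noteq> ns m\<close> by blast
        then show False using v1(2) by simp
      qed
    qed
  qed
  have GL2': "\<forall>n v. v \<in> set ((P \<circ> ns) n) \<and> v \<notin> L \<longrightarrow> (\<forall>m. m \<noteq> n \<longrightarrow> v \<notin> set ((P \<circ> ns) m))"
  proof (intro allI impI)
    fix n v m assume h: "v \<in> set ((P \<circ> ns) n) \<and> v \<notin> L" "m \<noteq> n"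
    then have "ns m \<noteq> ns n" using nsinj by blast
    then show "v \<notin> set ((P \<circ> ns) m)" using GL2 h(1) by auto
  qed
  have GL3': "\<forall>n. \<forall>a\<in>L_lt L (P \<circ> ns) n. \<forall>b\<in>L_lt L (P \<circ> ns) n. path_le ((P \<circ> ns) n) a b \<longleftrightarrow> (a, b) \<in> r"
  proof (intro allI ballI)
    fix n a b assume "a \<in> L_lt L (P \<circ> ns) n" "b \<in> L_lt L (P \<circ> ns) n"
    then have "a \<in> L_lt L P (ns n)" "b \<in> L_lt L P (ns n)" using sub1 by blast+
    then show "path_le ((P \<circ> ns) n) a b \<longleftrightarrow> (a, b) \<in> r" using GL3 by simp
  qed
  have xyP: "\<forall>n. xy_path G ((P \<circ> ns) n) x y" using glD(8)[OF gl] by simp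
  have disj: "\<forall>i j. i \<noteq> j \<longrightarrow> path_edges ((P \<circ> ns) i) \<inter> path_edges ((P \<circ> ns) j) = {}"
  proof (intro allI impI)
    fix i j :: nat assume "i \<noteq> j"
    then have "ns i \<noteq> ns j" using nsinj by blast
    then show "path_edges ((P \<circ> ns) i) \<inter> path_edges ((P \<circ> ns) j) = {}" using glD(9)[OF gl] by simp
  qed
  have "grain_line G x y L r (P \<circ> ns)"
    unfolding grain_line_def
    using glD(1-7,13-15)[OF gl] xyP disj GL1 GL2' GL3' by (intro conjI)
  then show ?thesis using sm wp by blast
qed

theorem lemma5p5:
  fixes G :: "'a graph" and x y :: 'a and L :: "'a set" and r :: "'a rel"
    and P :: "nat \<Rightarrow> 'a list"
  assumes "subdivided_Pi_graph G"
    and "grain_line G x y L r P"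
  shows "wild L r \<and>
         (\<exists>ns :: nat \<Rightarrow> nat. strict_mono ns \<and> grain_line G x y L r (P \<circ> ns) \<and>
                              wildly_presented L r (P \<circ> ns))"
proof -
  obtain H where H: "Pi_graph H" "subdivision_of G H"
    using assms(1) unfolding subdivided_Pi_graph_def by blast
  obtain \<phi> where sd: "sdv G H \<phi>" using subdiv_sdv[OF H(2)] by blast
  have dense: "\<forall>a\<in>L. \<forall>b\<in>L. (a,b)\<in>r \<and> a\<noteq>b \<longrightarrow> (\<exists>c\<in>L. (a,c)\<in>r \<and> a\<noteq>c \<and> (c,b)\<in>r \<and> c\<noteq>b)"
  proof (intro ballI impI)
    fix a b assume "a\<in>L" "b\<in>L" "(a,b)\<in>r \<and> a\<noteq>b"
    then show "\<exists>c\<in>L. (a,c)\<in>r \<and> a\<noteq>c \<and> (c,b)\<in>r \<and> c\<noteq>b"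
      using density[OF assms(2) sd H(1)] by blast
  qed
  have "wild L r"
    by (rule wild_of_dense[OF glD(2,3,4,5,1,6,7)[OF assms(2)] dense])
  moreover have "\<exists>ns :: nat \<Rightarrow> nat. strict_mono ns \<and> grain_line G x y L r (P \<circ> ns) \<and>
                              wildly_presented L r (P \<circ> ns)"
    by (rule subseq_part[OF assms(2) dense])
  ultimately show ?thesis by blast
qed

end
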